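(* Let $K=K'=2$. For every $f\in\mathcal C^2([0,1])$, the process $$f(R^h_t)-f(R^h_0)-\int_0^t(G^0+G^1)f(R^h_s)\,ds,\qquad t\ge0,$$ is a martingale, where for $x\in[0,1]$ $$G^0f(x)=c(1-2x)f'(x)+\int_{(0,1]}y(1-y)\nu(dy)\,[f(x(1-y)+y)-f(x)]+\int_{(0,1]}y(1-y)\nu(dy)\,[f(x(1-y))-f(x)],$$ $$G^1f(x)=\tfrac12cx(1-x)f''(x)+x\int_{(0,1]}(1-y)^2\nu(dy)\,[f(x(1-y)+y)-f(x)]+(1-x)\int_{(0,1]}(1-y)^2\nu(dy)\,[f(x(1-y))-f(x)].$$ That is, $G^0+G^1$ is a generator for $R^h$.
   Context: Fix $c\ge0$ and a measure $\nu$ on $(0,1]$ with $\int_{(0,1]}x^2\nu(dx)<\infty$. Let $R=(R_t)_{t\ge0}$ be the two-type generalized Fleming–Viot process without mutation, identified with the $[0,1]$-valued process $R_t=$ (proportion of type 1), i.e. the Markov process with generator $$Gf(x)=\tfrac12cx(1-x)f''(x)+x\int_{(0,1]}\nu(dy)[f(x(1-y)+y)-f(x)]+(1-x)\int_{(0,1]}\nu(dy)[f(x(1-y))-f(x)],$$ with a random initial value $R_0$ satisfying $\mathbb E[R_0(1-R_0)]>0$. Let $r_2=c+\int_{(0,1]}\nu(dx)\big(1-(1-x)^2-2x(1-x)\big)$. Then $H(t,x)=x(1-x)e^{r_2t}$ is space-time harmonic for $R$ (i.e. $H(t,R_t)$ is a martingale), and $R^h$ denotes the Doob $h$-transform of $R$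 by $H$: the process whose law satisfies $\mathbb P(R^h\in A)=\mathbb E\big(\mathbf 1_A(R)\,H(t,R_t)\big)/\mathbb E[H(0,R_0)]$ for events $A$ determined by the path on $[0,t]$. *)

theory Defs
  imports "HOL-Probability.Probability"
begin

definition C2_01 :: "(real \<Rightarrow> real) \<Rightarrow> (real \<Rightarrow> real) \<Rightarrow> (real \<Rightarrow> real) \<Rightarrow> bool" where
  "C2_01 f f1 f2 \<longleftrightarrow>
     (\<forall>x\<in>{0..1}. (f has_real_derivative f1 x) (at x within {0..1})
               \<and> (f1 has_real_derivative f2 x) (at x within {0..1}))
     \<and> continuous_on {0..1} f2"

definition cadlag :: "(real \<Rightarrow> real) \<Rightarrow> bool" where
  "cadlag g \<longleftrightarrow> (\<forall>t\<ge>0. continuous (at_right t) g) \<and> (\<forall>t>0. \<exists>l. (g \<longlongrightarrow> l) (at_left t))"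

definition natfilt :: "'a measure \<Rightarrow> (real \<Rightarrow> 'a \<Rightarrow> real) \<Rightarrow> real \<Rightarrow> 'a measure" where
  "natfilt M X t = vimage_algebra (space M) (\<lambda>\<omega>. restrict (\<lambda>s. X s \<omega>) {0..t}) (\<Pi>\<^sub>M s\<in>{0..t}. borel)"

definition martingale :: "'a measure \<Rightarrow> (real \<Rightarrow> 'a measure) \<Rightarrow> (real \<Rightarrow> 'a \<Rightarrow> real) \<Rightarrow> bool" where
  "martingale M F X \<longleftrightarrow>
     (\<forall>t\<ge>0. integrable M (X t) \<and> X t \<in> borel_measurable (F t)) \<and>
     (\<forall>s t A. 0 \<le> s \<longrightarrow> s \<le> t \<longrightarrow> A \<in> sets (F s) \<longrightarrow>
        (LINT \<omega>:A|M. X t \<omega>) = (LINT \<omega>:A|M. X s \<omega>))"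

text \<open>Generator G of the two-type generalized Fleming--Viot process (the two jump integrals
  are combined into one integral, so that the compensation of first-order terms is respected).\<close>
definition genG :: "real \<Rightarrow> real measure \<Rightarrow> (real \<Rightarrow> real) \<Rightarrow> (real \<Rightarrow> real) \<Rightarrow> real \<Rightarrow> real" where
  "genG c \<nu> f f2 x = 1/2 * c * x * (1 - x) * f2 x
     + (LINT y:{0<..1}|\<nu>. x * (f (x * (1 - y) + y) - f x) + (1 - x) * (f (x * (1 - y)) - f x))"

definition genG0 :: "real \<Rightarrow> real measure \<Rightarrow> (real \<Rightarrow> real) \<Rightarrow> (real \<Rightarrow> real) \<Rightarrow> real \<Rightarrow> real" where
  "genG0 c \<nu> f f1 x = c * (1 - 2 * x) * f1 x
     + (LINT y:{0<..1}|\<nu>. y * (1 - y) * ((f (x * (1 - y) + y) - f x) + (f (x * (1 - y)) - f x)))"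

definition genG1 :: "real \<Rightarrow> real measure \<Rightarrow> (real \<Rightarrow> real) \<Rightarrow> (real \<Rightarrow> real) \<Rightarrow> real \<Rightarrow> real" where
  "genG1 c \<nu> f f2 x = 1/2 * c * x * (1 - x) * f2 x
     + (LINT y:{0<..1}|\<nu>. (1 - y)^2 * (x * (f (x * (1 - y) + y) - f x) + (1 - x) * (f (x * (1 - y)) - f x)))"

definition r2 :: "real \<Rightarrow> real measure \<Rightarrow> real" where
  "r2 c \<nu> = c + (LINT x:{0<..1}|\<nu>. 1 - (1 - x)^2 - 2 * x * (1 - x))"

definition Hfun :: "real \<Rightarrow> real measure \<Rightarrow> real \<Rightarrow> real \<Rightarrow> real" where
  "Hfun c \<nu> t x = x * (1 - x) * exp (r2 c \<nu> * t)"

end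

theory Submission
  imports Defs
begin

definition cl :: "real \<Rightarrow> real" where "cl x = max 0 (min 1 x)"

lemma cl_in: "cl x \<in> {0..1}" by (auto simp: cl_def)
lemma cl_id: "x \<in> {0..1} \<Longrightarrow> cl x = x" by (auto simp: cl_def)
lemma cont_cl: "continuous_on UNIV cl"
  unfolding cl_def by (intro continuous_intros)

definition C2c :: "(real \<Rightarrow> real) \<Rightarrow> (real \<Rightarrow> real) \<Rightarrow> (real \<Rightarrow> real) \<Rightarrow> bool" where
  "C2c g g1 g2 \<longleftrightarrow> C2_01 g g1 g2 \<and> continuous_on UNIV g \<and> continuous_on UNIV g1 \<and> continuous_on UNIV g2"

lemma cont_comp_cl:
  assumes "continuous_on {0..1} g" shows "continuous_on UNIV (\<lambda>x. g (cl x))"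
  by (rule continuous_on_compose2[OF assms cont_cl]) (auto simp: cl_def)

lemma C2_cont:
  assumes "C2_01 g g1 g2"
  shows "continuous_on {0..1} g" "continuous_on {0..1} g1" "continuous_on {0..1} g2"
  using assms unfolding C2_01_def by (auto intro: DERIV_continuous_on)

lemma C2_clamp:
  assumes "C2_01 g g1 g2"
  shows "C2c (\<lambda>x. g (cl x)) (\<lambda>x. g1 (cl x)) (\<lambda>x. g2 (cl x))"
proof -
  have d: "((\<lambda>x. h (cl x)) has_real_derivative h' x) (at x within {0..1})"
    if "(h has_real_derivative h' x) (at x within {0..1})" "x \<in> {0..1}" for h h' x
    by (rule has_field_derivative_transform_within[OF that(1), of 1]) (use that in \<open>auto simp: cl_id\<close>)
  have "C2_01 (\<lambda>x. g (cl x)) (\<lambda>x. g1 (cl x)) (\<lambda>x. g2 (cl x))"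
    unfolding C2_01_def
  proof (intro conjI ballI)
    fix x :: real assume x: "x \<in> {0..1}"
    show "((\<lambda>x. g (cl x)) has_real_derivative g1 (cl x)) (at x within {0..1})"
      using d[of g g1 x] assms x by (auto simp: C2_01_def cl_id)
    show "((\<lambda>x. g1 (cl x)) has_real_derivative g2 (cl x)) (at x within {0..1})"
      using d[of g1 g2 x] assms x by (auto simp: C2_01_def cl_id)
  next
    show "continuous_on {0..1} (\<lambda>x. g2 (cl x))"
      using cont_comp_cl[OF C2_cont(3)[OF assms]] continuous_on_subset by blast
  qed
  then show ?thesis unfolding C2c_def
    using cont_comp_cl C2_cont[OF assms] by blast
qed

lemma cont_bounded01:
  fixes q :: "real \<Rightarrow> real"
  assumes "continuous_on {0..1} q" shows "\<exists>B. \<forall>x\<in>{0..1}. \<bar>q x\<bar> \<le> B"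
proof -
  have "compact (q ` {0..1::real})" by (intro compact_continuous_image assms) auto
  then have "bounded (q ` {0..1::real})" by (rule compact_imp_bounded)
  then obtain B where "\<forall>y\<in>q ` {0..1}. norm y \<le> B" unfolding bounded_iff by blast
  then show ?thesis by auto
qed

lemma C2_K:
  assumes "C2_01 g g1 g2"
  obtains K where "K \<ge> 0" "\<And>x. x \<in> {0..1} \<Longrightarrow> \<bar>g1 x\<bar> \<le> K \<and> \<bar>g2 x\<bar> \<le> K"
proof -
  obtain B1 where B1: "\<forall>x\<in>{0..1}. \<bar>g1 x\<bar> \<le> B1" using cont_bounded01 C2_cont(2)[OF assms] by blast
  obtain B2 where B2: "\<forall>x\<in>{0..1}. \<bar>g2 x\<bar> \<le> B2" using cont_bounded01 C2_cont(3)[OF assms] by blast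
  show ?thesis apply (rule that[of "max 0 (max B1 B2)"]) using B1 B2 by force+
qed

lemma lip_bound:
  assumes d: "\<And>x. x \<in> {0..1} \<Longrightarrow> (h has_real_derivative h' x) (at x within {0..1})"
    and K: "\<And>x. x \<in> {0..1} \<Longrightarrow> \<bar>h' x\<bar> \<le> K"
    and a: "a \<in> {0..1}" and b: "b \<in> {0..1}"
  shows "\<bar>h a - h b\<bar> \<le> K * \<bar>a - b\<bar>"
  using field_differentiable_bound[of "{0..1}" h h' K a b] d K a b by auto

lemma taylor_bound:
  assumes C: "C2_01 g g1 g2" and K: "\<And>x. x \<in> {0..1} \<Longrightarrow> \<bar>g1 x\<bar> \<le> K \<and> \<bar>g2 x\<bar> \<le> K"
    and a: "a \<in> {0..1}" and b: "b \<in> {0..1}"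
  shows "\<bar>g a - g b - g1 b * (a - b)\<bar> \<le> K * (a - b)^2"
proof -
  let ?S = "{min a b..max a b}"
  have S: "?S \<subseteq> {0..1}" using a b by auto
  have der: "((\<lambda>z. g z - g1 b * z) has_real_derivative (g1 z - g1 b)) (at z within ?S)" if "z \<in> ?S" for z
  proof -
    have "z \<in> {0..1}" using S that by blast
    then have "(g has_real_derivative g1 z) (at z within {0..1})" using C by (auto simp: C2_01_def)
    then have "(g has_real_derivative g1 z) (at z within ?S)" using S by (rule DERIV_subset)
    then show ?thesis by (auto intro!: derivative_eq_intros)
  qed
  have bnd: "norm (g1 z - g1 b) \<le> K * \<bar>a - b\<bar>" if "z \<in> ?S" for z
  proof -
    have z01: "z \<in> {0..1}" using S that by blast
    have "\<bar>g1 z - g1 b\<bar> \<le> K * \<bar>z - b\<bar>"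
      using z01 lip_bound[of g1 g2 K z b] C K S that b by (auto simp: C2_01_def)
    also have "\<dots> \<le> K * \<bar>a - b\<bar>" using that K[OF a] by (intro mult_left_mono) auto
    finally show ?thesis by simp
  qed
  have "norm ((g a - g1 b * a) - (g b - g1 b * b)) \<le> K * \<bar>a - b\<bar> * norm (a - b)"
    by (rule field_differentiable_bound[of ?S, OF _ der bnd]) auto
  then show ?thesis by (simp add: power2_eq_square algebra_simps)
qed

definition jumpA :: "(real \<Rightarrow> real) \<Rightarrow> real \<Rightarrow> real \<Rightarrow> real" where
  "jumpA g x y = y * (1 - y) * ((g (x * (1 - y) + y) - g x) + (g (x * (1 - y)) - g x))"
definition jumpB :: "(real \<Rightarrow> real) \<Rightarrow> real \<Rightarrow> real \<Rightarrow> real" where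
  "jumpB g x y = x * (g (x * (1 - y) + y) - g x) + (1 - x) * (g (x * (1 - y)) - g x)"

lemma args01:
  fixes x y :: real
  assumes "x \<in> {0..1}" "y \<in> {0..1}"
  shows "x * (1 - y) + y \<in> {0..1}" "x * (1 - y) \<in> {0..1}"
proof -
  have "x * (1 - y) \<le> 1 * (1 - y)" using assms by (intro mult_le_cancel_right[THEN iffD2]) auto
  then show "x * (1 - y) + y \<in> {0..1}" "x * (1 - y) \<in> {0..1}" using assms by auto
qed

lemma jumpA_bound:
  assumes C: "C2_01 g g1 g2" and K: "\<And>x. x \<in> {0..1} \<Longrightarrow> \<bar>g1 x\<bar> \<le> K \<and> \<bar>g2 x\<bar> \<le> K"
    and x: "x \<in> {0..1}" and y: "y \<in> {0..1}"
  shows "\<bar>jumpA g x y\<bar> \<le> K * y^2"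
proof -
  have K0: "K \<ge> 0" using K[OF x] by auto
  have d: "\<And>z. z \<in> {0..1} \<Longrightarrow> (g has_real_derivative g1 z) (at z within {0..1})" using C by (auto simp: C2_01_def)
  have a1': "(x * (1 - y) + y) - x = y * (1 - x)" by (simp add: algebra_simps)
  have a1: "\<bar>(x * (1 - y) + y) - x\<bar> = y * (1 - x)" unfolding a1' using x y by simp
  have a2': "(x * (1 - y)) - x = - (x * y)" by (simp add: algebra_simps)
  have a2: "\<bar>(x * (1 - y)) - x\<bar> = x * y" unfolding a2' using x y by simp
  have e1: "\<bar>g (x * (1 - y) + y) - g x\<bar> \<le> K * (y * (1 - x))"
    using lip_bound[OF d _ args01(1)[OF x y] x, of K] K a1 by auto
  have e2: "\<bar>g (x * (1 - y)) - g x\<bar> \<le> K * (x * y)"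
    using lip_bound[OF d _ args01(2)[OF x y] x, of K] K a2 by auto
  have "\<bar>jumpA g x y\<bar> = y * (1 - y) * \<bar>(g (x * (1 - y) + y) - g x) + (g (x * (1 - y)) - g x)\<bar>"
    using y by (simp add: jumpA_def abs_mult)
  also have "\<dots> \<le> y * (1 - y) * (K * (y * (1 - x)) + K * (x * y))"
    using y e1 e2 by (intro mult_left_mono) auto
  also have "\<dots> = K * y^2 * (1 - y)" by (simp add: algebra_simps power2_eq_square)
  also have "\<dots> \<le> K * y^2" using y K0 by (intro mult_left_le) auto
  finally show ?thesis .
qed

lemma jumpB_bound:
  assumes C: "C2_01 g g1 g2" and K: "\<And>x. x \<in> {0..1} \<Longrightarrow> \<bar>g1 x\<bar> \<le> K \<and> \<bar>g2 x\<bar> \<le> K"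
    and x: "x \<in> {0..1}" and y: "y \<in> {0..1}"
  shows "\<bar>jumpB g x y\<bar> \<le> K * y^2"
proof -
  have K0: "K \<ge> 0" using K[OF x] by auto
  define e1 where "e1 = g (x * (1 - y) + y) - g x - g1 x * (y * (1 - x))"
  define e2 where "e2 = g (x * (1 - y)) - g x - g1 x * (- (x * y))"
  have b1: "\<bar>e1\<bar> \<le> K * (y * (1 - x))^2"
    using taylor_bound[OF C K args01(1)[OF x y] x] unfolding e1_def by (simp add: algebra_simps)
  have b2: "\<bar>e2\<bar> \<le> K * (x * y)^2"
    using taylor_bound[OF C K args01(2)[OF x y] x] unfolding e2_def by (simp add: algebra_simps power2_eq_square)
  have "jumpB g x y = x * e1 + (1 - x) * e2"
    unfolding jumpB_def e1_def e2_def by (simp add: algebra_simps)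
  then have "\<bar>jumpB g x y\<bar> \<le> \<bar>x * e1\<bar> + \<bar>(1 - x) * e2\<bar>"
    by (simp only: abs_triangle_ineq)
  also have "\<dots> = x * \<bar>e1\<bar> + (1 - x) * \<bar>e2\<bar>" using x by (simp add: abs_mult)
  also have "\<dots> \<le> x * (K * (y * (1 - x))^2) + (1 - x) * (K * (x * y)^2)"
    using x b1 b2 by (intro add_mono mult_left_mono) auto
  also have "\<dots> = K * y^2 * (x * (1 - x))" by (simp add: algebra_simps power2_eq_square)
  also have "\<dots> \<le> K * y^2"
  proof -
    have "x * (1 - x) \<le> 1" using x by (auto intro: mult_le_one)
    then show ?thesis using K0 by (intro mult_left_le) auto
  qed
  finally show ?thesis .
qed

lemma meas_nu:
  assumes "sets \<nu> = sets borel" "h \<in> borel_measurable borel"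
  shows "h \<in> borel_measurable \<nu>"
  using assms measurable_cong_sets[OF assms(1) refl] by simp

lemma int_y2:
  assumes nu_sets: "sets \<nu> = sets borel" and nu_fin: "(\<integral>\<^sup>+ x. ennreal (x^2) \<partial>\<nu>) < \<infinity>"
  shows "integrable \<nu> (\<lambda>y::real. y^2)"
proof (rule integrableI_nonneg)
  show "(\<lambda>y::real. y^2) \<in> borel_measurable \<nu>" by (rule meas_nu[OF nu_sets]) simp
  show "AE x in \<nu>. 0 \<le> x^2" by simp
  show "(\<integral>\<^sup>+ x. ennreal (x^2) \<partial>\<nu>) < \<infinity>" by (rule nu_fin)
qed

lemma INT:
  fixes F :: "real \<Rightarrow> real \<Rightarrow> real"
  assumes nu_sets: "sets \<nu> = sets borel" and nu_fin: "(\<integral>\<^sup>+ x. ennreal (x^2) \<partial>\<nu>) < \<infinity>"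
    and Fm: "\<And>x. (\<lambda>y. F x y) \<in> borel_measurable borel"
    and Fc: "\<And>y. y \<in> {0<..1} \<Longrightarrow> continuous_on {0..1} (\<lambda>x. F x y)"
    and Fb: "\<And>x y. x \<in> {0..1} \<Longrightarrow> y \<in> {0<..1} \<Longrightarrow> \<bar>F x y\<bar> \<le> C * y^2"
  shows INT_int: "\<And>x. x \<in> {0..1} \<Longrightarrow> set_integrable \<nu> {0<..1} (F x)"
    and INT_cont: "continuous_on {0..1} (\<lambda>x. LINT y:{0<..1}|\<nu>. F x y)"
proof -
  have w: "integrable \<nu> (\<lambda>y. \<bar>C\<bar> * y^2)" using int_y2[OF nu_sets nu_fin] by simp
  have sm: "(\<lambda>y. indicator {0<..1} y *\<^sub>R F x y) \<in> borel_measurable \<nu>" for x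
    by (rule meas_nu[OF nu_sets]) (intro borel_measurable_scaleR borel_measurable_indicator Fm; simp)
  have bnd: "norm (indicator {0<..1} y *\<^sub>R F x y) \<le> \<bar>C\<bar> * y^2" if "x \<in> {0..1}" for x y
  proof (cases "y \<in> {0<..1}")
    case True
    then have "\<bar>F x y\<bar> \<le> C * y^2" using Fb that by auto
    also have "\<dots> \<le> \<bar>C\<bar> * y^2" by (intro mult_right_mono) auto
    finally show ?thesis using True by simp
  qed simp
  show int: "set_integrable \<nu> {0<..1} (F x)" if "x \<in> {0..1}" for x
    unfolding set_integrable_def
    by (rule Bochner_Integration.integrable_bound[OF w sm]) (rule AE_I2, use bnd[OF that] in simp)
  show "continuous_on {0..1} (\<lambda>x. LINT y:{0<..1}|\<nu>. F x y)"
  proof (rule continuous_on_sequentiallyI)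
    fix u :: "nat \<Rightarrow> real" and a assume u: "\<forall>n. u n \<in> {0..1}" "a \<in> {0..1}" "u \<longlonglongrightarrow> a"
    show "(\<lambda>n. LINT y:{0<..1}|\<nu>. F (u n) y) \<longlonglongrightarrow> (LINT y:{0<..1}|\<nu>. F a y)"
      unfolding set_lebesgue_integral_def
    proof (rule integral_dominated_convergence[OF sm sm w])
      show "AE y in \<nu>. (\<lambda>n. indicator {0<..1} y *\<^sub>R F (u n) y) \<longlonglongrightarrow> indicator {0<..1} y *\<^sub>R F a y"
      proof (rule AE_I2)
        fix y show "(\<lambda>n. indicator {0<..1} y *\<^sub>R F (u n) y) \<longlonglongrightarrow> indicator {0<..1} y *\<^sub>R F a y"
        proof (cases "y \<in> {0<..1}")
          case True
          have "(\<lambda>n. F (u n) y) \<longlonglongrightarrow> F a y"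
            using Fc[OF True] u unfolding continuous_on_sequentially comp_def by blast
          then show ?thesis by (intro tendsto_intros)
        qed simp
      qed
      show "AE y in \<nu>. norm (indicator {0<..1} y *\<^sub>R F (u n) y) \<le> \<bar>C\<bar> * y^2" for n
        using bnd u(1) by (intro AE_I2) blast
    qed
  qed
qed

lemma cont_meas: "continuous_on UNIV (h::real\<Rightarrow>real) \<Longrightarrow> h \<in> borel_measurable borel"
  by (rule borel_measurable_continuous_onI)

context
  fixes \<nu> :: "real measure" and g g1 g2 :: "real \<Rightarrow> real"
  assumes nu_sets: "sets \<nu> = sets borel" and nu_fin: "(\<integral>\<^sup>+ x. ennreal (x^2) \<partial>\<nu>) < \<infinity>"
    and C: "C2c g g1 g2"
begin

lemma gc: "continuous_on UNIV g" using C by (simp add: C2c_def)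
lemma C2: "C2_01 g g1 g2" using C by (simp add: C2c_def)

lemma contA: "continuous_on UNIV (\<lambda>p::real\<times>real. jumpA g (fst p) (snd p))"
  unfolding jumpA_def by (intro continuous_intros continuous_on_compose2[OF gc]) auto
lemma contB: "continuous_on UNIV (\<lambda>p::real\<times>real. jumpB g (fst p) (snd p))"
  unfolding jumpB_def by (intro continuous_intros continuous_on_compose2[OF gc]) auto

lemma contA_y: "continuous_on UNIV (\<lambda>y. jumpA g x y)"
proof -
  have "continuous_on UNIV (\<lambda>y. (x, y))" by (intro continuous_intros)
  from continuous_on_compose2[OF contA this] show ?thesis by simp
qed
lemma contB_y: "continuous_on UNIV (\<lambda>y. jumpB g x y)"
proof -
  have "continuous_on UNIV (\<lambda>y. (x, y))" by (intro continuous_intros)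
  from continuous_on_compose2[OF contB this] show ?thesis by simp
qed
lemma contA_x: "continuous_on S (\<lambda>x. jumpA g x y)"
proof -
  have "continuous_on S (\<lambda>x. (x, y))" by (intro continuous_intros)
  from continuous_on_compose2[OF contA this] show ?thesis by simp
qed
lemma contB_x: "continuous_on S (\<lambda>x. jumpB g x y)"
proof -
  have "continuous_on S (\<lambda>x. (x, y))" by (intro continuous_intros)
  from continuous_on_compose2[OF contB this] show ?thesis by simp
qed


lemma intA: "x \<in> {0..1} \<Longrightarrow> set_integrable \<nu> {0<..1} (jumpA g x)"
  and contIA: "continuous_on {0..1} (\<lambda>x. LINT y:{0<..1}|\<nu>. jumpA g x y)"
proof -
  obtain K where K: "K \<ge> 0" "\<And>x. x \<in> {0..1} \<Longrightarrow> \<bar>g1 x\<bar> \<le> K \<and> \<bar>g2 x\<bar> \<le> K" by (rule C2_K[OF C2]) blast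
  have m: "\<And>x. (\<lambda>y. jumpA g x y) \<in> borel_measurable borel" by (rule cont_meas[OF contA_y])
  have c: "\<And>y. y \<in> {0<..1} \<Longrightarrow> continuous_on {0..1} (\<lambda>x. jumpA g x y)" by (rule contA_x)
  have b: "\<And>x y. x \<in> {0..1} \<Longrightarrow> y \<in> {0<..1} \<Longrightarrow> \<bar>jumpA g x y\<bar> \<le> K * y^2"
    using jumpA_bound[OF C2 K(2)] by auto
  show "x \<in> {0..1} \<Longrightarrow> set_integrable \<nu> {0<..1} (jumpA g x)" 
    using INT_int[OF nu_sets nu_fin m c b] by blast
  show "continuous_on {0..1} (\<lambda>x. LINT y:{0<..1}|\<nu>. jumpA g x y)"
    using INT_cont[OF nu_sets nu_fin m c b] by blast
qed

lemma intB: "x \<in> {0..1} \<Longrightarrow> set_integrable \<nu> {0<..1} (jumpB g x)"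
  and contIB: "continuous_on {0..1} (\<lambda>x. LINT y:{0<..1}|\<nu>. jumpB g x y)"
proof -
  obtain K where K: "K \<ge> 0" "\<And>x. x \<in> {0..1} \<Longrightarrow> \<bar>g1 x\<bar> \<le> K \<and> \<bar>g2 x\<bar> \<le> K" by (rule C2_K[OF C2]) blast
  have m: "\<And>x. (\<lambda>y. jumpB g x y) \<in> borel_measurable borel" by (rule cont_meas[OF contB_y])
  have c: "\<And>y. y \<in> {0<..1} \<Longrightarrow> continuous_on {0..1} (\<lambda>x. jumpB g x y)" by (rule contB_x)
  have b: "\<And>x y. x \<in> {0..1} \<Longrightarrow> y \<in> {0<..1} \<Longrightarrow> \<bar>jumpB g x y\<bar> \<le> K * y^2"
    using jumpB_bound[OF C2 K(2)] by auto
  show "x \<in> {0..1} \<Longrightarrow> set_integrable \<nu> {0<..1} (jumpB g x)" 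
    using INT_int[OF nu_sets nu_fin m c b] by blast
  show "continuous_on {0..1} (\<lambda>x. LINT y:{0<..1}|\<nu>. jumpB g x y)"
    using INT_cont[OF nu_sets nu_fin m c b] by blast
qed

lemma intB2: "x \<in> {0..1} \<Longrightarrow> set_integrable \<nu> {0<..1} (\<lambda>y. (1 - y)^2 * jumpB g x y)"
  and contIB2: "continuous_on {0..1} (\<lambda>x. LINT y:{0<..1}|\<nu>. (1 - y)^2 * jumpB g x y)"
proof -
  obtain K where K: "K \<ge> 0" "\<And>x. x \<in> {0..1} \<Longrightarrow> \<bar>g1 x\<bar> \<le> K \<and> \<bar>g2 x\<bar> \<le> K" by (rule C2_K[OF C2]) blast
  have m: "\<And>x. (\<lambda>y. (1 - y)^2 * jumpB g x y) \<in> borel_measurable borel"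
    by (rule cont_meas) (intro continuous_intros contB_y)
  have c: "\<And>y. y \<in> {0<..1} \<Longrightarrow> continuous_on {0..1} (\<lambda>x. (1 - y)^2 * jumpB g x y)"
    by (intro continuous_intros contB_x)
  have b: "\<bar>(1 - y)^2 * jumpB g x y\<bar> \<le> K * y^2" if "x \<in> {0..1}" "y \<in> {0<..1}" for x y
  proof -
    have "\<bar>(1 - y)^2 * jumpB g x y\<bar> = (1 - y)^2 * \<bar>jumpB g x y\<bar>" by (simp add: abs_mult)
    also have "\<dots> \<le> 1 * \<bar>jumpB g x y\<bar>"
    proof (rule mult_right_mono)
      have "(1 - y)^2 \<le> 1^2" using that by (intro power_mono) auto
      then show "(1 - y)^2 \<le> 1" by simp
    qed simp
    also have "\<dots> \<le> K * y^2" using jumpB_bound[OF C2 K(2)] that by auto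
    finally show ?thesis .
  qed
  show "x \<in> {0..1} \<Longrightarrow> set_integrable \<nu> {0<..1} (\<lambda>y. (1 - y)^2 * jumpB g x y)" 
    using INT_int[OF nu_sets nu_fin m c b] by blast
  show "continuous_on {0..1} (\<lambda>x. LINT y:{0<..1}|\<nu>. (1 - y)^2 * jumpB g x y)"
    using INT_cont[OF nu_sets nu_fin m c b] by blast
qed

lemma genG0_eq: "genG0 c \<nu> g g1 = (\<lambda>x. c * (1 - 2 * x) * g1 x + (LINT y:{0<..1}|\<nu>. jumpA g x y))"
  unfolding genG0_def jumpA_def by simp
lemma genG1_eq: "genG1 c \<nu> g g2 = (\<lambda>x. 1/2 * c * x * (1 - x) * g2 x + (LINT y:{0<..1}|\<nu>. (1 - y)^2 * jumpB g x y))"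
  unfolding genG1_def jumpB_def by simp
lemma genG_eq: "genG c \<nu> g g2 = (\<lambda>x. 1/2 * c * x * (1 - x) * g2 x + (LINT y:{0<..1}|\<nu>. jumpB g x y))"
  unfolding genG_def jumpB_def by simp

lemma cont_genG0: "continuous_on {0..1} (genG0 c \<nu> g g1)"
  unfolding genG0_eq using C contIA by (intro continuous_intros) (auto simp: C2c_def intro: continuous_on_subset)
lemma cont_genG1: "continuous_on {0..1} (genG1 c \<nu> g g2)"
  unfolding genG1_eq using C contIB2 by (intro continuous_intros) (auto simp: C2c_def intro: continuous_on_subset)
lemma cont_genG: "continuous_on {0..1} (genG c \<nu> g g2)"
  unfolding genG_eq using C contIB by (intro continuous_intros) (auto simp: C2c_def intro: continuous_on_subset)

end

definition hh :: "real \<Rightarrow> real" where "hh x = x * (1 - x)"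

lemma C2c_prod:
  assumes "C2c f f1 f2"
  shows "C2c (\<lambda>x. hh x * f x) (\<lambda>x. (1 - 2 * x) * f x + hh x * f1 x)
             (\<lambda>x. - 2 * f x + 2 * (1 - 2 * x) * f1 x + hh x * f2 x)"
proof -
  have C: "C2_01 f f1 f2" and c: "continuous_on UNIV f" "continuous_on UNIV f1" "continuous_on UNIV f2"
    using assms by (auto simp: C2c_def)
  have "C2_01 (\<lambda>x. hh x * f x) (\<lambda>x. (1 - 2 * x) * f x + hh x * f1 x)
             (\<lambda>x. - 2 * f x + 2 * (1 - 2 * x) * f1 x + hh x * f2 x)"
    unfolding C2_01_def
  proof (intro conjI ballI)
    fix x :: real assume x: "x \<in> {0..1}"
    have d1: "(f has_real_derivative f1 x) (at x within {0..1})" and d2: "(f1 has_real_derivative f2 x) (at x within {0..1})"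
      using C x by (auto simp: C2_01_def)
    show "((\<lambda>x. hh x * f x) has_real_derivative (1 - 2 * x) * f x + hh x * f1 x) (at x within {0..1})"
      unfolding hh_def by (auto intro!: derivative_eq_intros d1 simp: algebra_simps)
    show "((\<lambda>x. (1 - 2 * x) * f x + hh x * f1 x) has_real_derivative - 2 * f x + 2 * (1 - 2 * x) * f1 x + hh x * f2 x) (at x within {0..1})"
      unfolding hh_def by (auto intro!: derivative_eq_intros d1 d2 simp: algebra_simps)
  next
    show "continuous_on {0..1} (\<lambda>x. - 2 * f x + 2 * (1 - 2 * x) * f1 x + hh x * f2 x)"
    proof -
      have "continuous_on UNIV (\<lambda>x. - 2 * f x + 2 * (1 - 2 * x) * f1 x + hh x * f2 x)"
        unfolding hh_def using c by (auto intro!: continuous_intros)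
      then show ?thesis by (rule continuous_on_subset) auto
    qed
  qed
  moreover have "continuous_on UNIV (\<lambda>x. hh x * f x)" "continuous_on UNIV (\<lambda>x. (1 - 2 * x) * f x + hh x * f1 x)"
    "continuous_on UNIV (\<lambda>x. - 2 * f x + 2 * (1 - 2 * x) * f1 x + hh x * f2 x)"
    unfolding hh_def using c by (auto intro!: continuous_intros)
  ultimately show ?thesis unfolding C2c_def by blast
qed

lemma pointwise_id:
  "jumpB (\<lambda>x. hh x * f x) x y + hh x * f x * y^2
   = hh x * jumpA f x y + hh x * ((1 - y)^2 * jumpB f x y)"
  unfolding jumpA_def jumpB_def hh_def by algebra

lemma r2_eq: "r2 c \<nu> = c + (LINT y:{0<..1}|\<nu>. y^2)"
proof -
  have "(\<lambda>x::real. 1 - (1 - x)^2 - 2 * x * (1 - x)) = (\<lambda>x. x^2)" by (rule ext) algebra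
  then show ?thesis unfolding r2_def by simp
qed

lemma gen_identity:
  fixes \<nu> :: "real measure"
  assumes nu_sets: "sets \<nu> = sets borel" and nu_fin: "(\<integral>\<^sup>+ x. ennreal (x^2) \<partial>\<nu>) < \<infinity>"
    and C: "C2c f f1 f2" and x: "x \<in> {0..1}"
  shows "hh x * (genG0 c \<nu> f f1 x + genG1 c \<nu> f f2 x)
     = genG c \<nu> (\<lambda>x. hh x * f x) (\<lambda>x. - 2 * f x + 2 * (1 - 2 * x) * f1 x + hh x * f2 x) x
       + r2 c \<nu> * (hh x * f x)"
proof -
  note Cp = C2c_prod[OF C]
  have iA: "set_integrable \<nu> {0<..1} (jumpA f x)" by (rule intA[OF nu_sets nu_fin C x])
  have iB2: "set_integrable \<nu> {0<..1} (\<lambda>y. (1 - y)^2 * jumpB f x y)" by (rule intB2[OF nu_sets nu_fin C x])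
  have iBp: "set_integrable \<nu> {0<..1} (jumpB (\<lambda>x. hh x * f x) x)" by (rule intB[OF nu_sets nu_fin Cp x])
  have iy2: "set_integrable \<nu> {0<..1} (\<lambda>y::real. y^2)"
    unfolding set_integrable_def
    by (rule integrable_mult_indicator) (use nu_sets int_y2[OF nu_sets nu_fin] in auto)
  have S: "{0<..1::real} \<in> sets \<nu>" using nu_sets by simp
  have eqn: "(LINT y:{0<..1}|\<nu>. jumpB (\<lambda>x. hh x * f x) x y + hh x * f x * y^2)
      = (LINT y:{0<..1}|\<nu>. hh x * jumpA f x y + hh x * ((1 - y)^2 * jumpB f x y))"
    by (rule set_lebesgue_integral_cong[OF S]) (simp add: pointwise_id)
  define IA where "IA = (LINT y:{0<..1}|\<nu>. jumpA f x y)"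
  define IB2 where "IB2 = (LINT y:{0<..1}|\<nu>. (1 - y)^2 * jumpB f x y)"
  define IBp where "IBp = (LINT y:{0<..1}|\<nu>. jumpB (\<lambda>x. hh x * f x) x y)"
  define I2 where "I2 = (LINT y:{0<..1}|\<nu>. y^2)"
  have l1: "(LINT y:{0<..1}|\<nu>. jumpB (\<lambda>x. hh x * f x) x y + hh x * f x * y^2) = IBp + hh x * f x * I2"
    unfolding IBp_def I2_def
    by (subst set_integral_add(2)[OF iBp set_integrable_mult_right[OF iy2]]) simp
  have l2: "(LINT y:{0<..1}|\<nu>. hh x * jumpA f x y + hh x * ((1 - y)^2 * jumpB f x y)) = hh x * IA + hh x * IB2"
    unfolding IA_def IB2_def
    by (subst set_integral_add(2)[OF set_integrable_mult_right[OF iA] set_integrable_mult_right[OF iB2]]) simp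
  have key: "IBp + hh x * f x * I2 = hh x * IA + hh x * IB2" using eqn l1 l2 by simp
  have e0: "genG0 c \<nu> f f1 x = c * (1 - 2 * x) * f1 x + IA"
    unfolding IA_def genG0_eq[OF nu_sets nu_fin C] by simp
  have e1: "genG1 c \<nu> f f2 x = 1/2 * c * x * (1 - x) * f2 x + IB2"
    unfolding IB2_def genG1_eq[OF nu_sets nu_fin C] by simp
  have e2: "genG c \<nu> (\<lambda>x. hh x * f x) (\<lambda>x. - 2 * f x + 2 * (1 - 2 * x) * f1 x + hh x * f2 x) x
     = 1/2 * c * x * (1 - x) * (- 2 * f x + 2 * (1 - 2 * x) * f1 x + hh x * f2 x) + IBp"
    unfolding IBp_def genG_eq[OF nu_sets nu_fin Cp] by simp
  have e3: "r2 c \<nu> = c + I2" unfolding I2_def r2_eq ..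
  show ?thesis
  proof -
    have kb: "IBp = hh x * IA + hh x * IB2 - hh x * f x * I2" using key by linarith
    show ?thesis unfolding e0 e1 e2 e3 kb unfolding hh_def by algebra
  qed
qed

definition ct :: "real \<Rightarrow> real \<Rightarrow> real" where "ct t u = max 0 (min t u)"

lemma ct_id: "u \<in> {0..t} \<Longrightarrow> ct t u = u" by (auto simp: ct_def)
lemma ct_in: "t \<ge> 0 \<Longrightarrow> ct t u \<in> {0..t}" by (auto simp: ct_def)

lemma dyadic_conv:
  fixes u :: real
  shows "(\<lambda>n. real_of_int \<lceil>u * 2^n\<rceil> / 2^n) \<longlonglongrightarrow> u"
    and "real_of_int \<lceil>u * 2^n\<rceil> / 2^n \<ge> u"
proof -
  have lo: "real_of_int \<lceil>u * 2^n\<rceil> / 2^n \<ge> u" for n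
  proof -
    have "u * 2^n \<le> real_of_int \<lceil>u * 2^n\<rceil>" by (rule le_of_int_ceiling)
    then show ?thesis by (simp add: field_simps)
  qed
  have hi: "real_of_int \<lceil>u * 2^n\<rceil> / 2^n \<le> u + inverse (2^n)" for n
  proof -
    have "real_of_int \<lceil>u * 2^n\<rceil> \<le> u * 2^n + 1" using ceiling_correct[of "u * 2^n"] by linarith
    then show ?thesis by (simp add: field_simps)
  qed
  have "(\<lambda>n. u + inverse ((2::real)^n)) \<longlonglongrightarrow> u + 0"
    by (intro tendsto_intros LIMSEQ_inverse_realpow_zero) simp
  then have h: "(\<lambda>n. u + inverse ((2::real)^n)) \<longlonglongrightarrow> u" by simp
  show "(\<lambda>n. real_of_int \<lceil>u * 2^n\<rceil> / 2^n) \<longlonglongrightarrow> u"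
    by (rule tendsto_sandwich[where f="\<lambda>n. u" and h="\<lambda>n. u + inverse (2^n)", OF _ _ tendsto_const h])
       (use lo hi in auto)
  show "real_of_int \<lceil>u * 2^n\<rceil> / 2^n \<ge> u" by (rule lo)
qed

lemma joint_meas:
  fixes X :: "real \<Rightarrow> 'a \<Rightarrow> real" and F :: "'a measure"
  assumes t: "t \<ge> 0"
    and Xm: "\<And>u. u \<in> {0..t} \<Longrightarrow> X u \<in> borel_measurable F"
    and Xc: "\<And>\<omega> u. \<omega> \<in> space F \<Longrightarrow> 0 \<le> u \<Longrightarrow> u < t \<Longrightarrow> continuous (at_right u) (\<lambda>v. X v \<omega>)"
  shows "(\<lambda>p. X (ct t (fst p)) (snd p)) \<in> borel_measurable (lborel \<Otimes>\<^sub>M F)"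
proof (rule borel_measurable_LIMSEQ_real)
  define q where "q n (u::real) = real_of_int \<lceil>u * 2^n\<rceil> / (2::real)^n" for n u
  show "(\<lambda>p. X (ct t (q n (fst p))) (snd p)) \<in> borel_measurable (lborel \<Otimes>\<^sub>M F)" for n
  proof -
    have 1: "(\<lambda>p. X (ct t (real_of_int i / 2^n)) (snd p)) \<in> borel_measurable (lborel \<Otimes>\<^sub>M F)" for i :: int
      by (rule measurable_compose[OF measurable_snd Xm[OF ct_in[OF t]]])
    have 2: "(\<lambda>p. \<lceil>fst p * (2::real)^n\<rceil>) \<in> measurable (lborel \<Otimes>\<^sub>M F) (count_space UNIV)"
      by measurable
    show ?thesis unfolding q_def by (rule measurable_compose_countable[OF 1 2])
  qed
  fix p :: "real \<times> 'a" assume p: "p \<in> space (lborel \<Otimes>\<^sub>M F)"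
  obtain u \<omega> where pu: "p = (u, \<omega>)" and \<omega>: "\<omega> \<in> space F" using p by (cases p) (auto simp: space_pair_measure)
  have qc: "(\<lambda>n. q n u) \<longlonglongrightarrow> u" and qge: "\<And>n. q n u \<ge> u" unfolding q_def using dyadic_conv by auto
  show "(\<lambda>n. X (ct t (q n (fst p))) (snd p)) \<longlonglongrightarrow> X (ct t (fst p)) (snd p)"
    unfolding pu fst_conv snd_conv
  proof (cases "u < 0 \<or> u \<ge> t")
    case True
    have "ct t (q n u) = ct t u" for n
    proof (cases "u < 0")
      case True
      have "u * 2^n \<le> 0" using True by (simp add: mult_nonpos_nonneg)
      then have "\<lceil>u * 2^n\<rceil> \<le> 0" by (simp add: ceiling_le_zero)
      then have "q n u \<le> 0" unfolding q_def by (simp add: divide_nonpos_pos)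
      then show ?thesis using True t by (auto simp: ct_def)
    next
      case False
      then have "u \<ge> t" using \<open>u < 0 \<or> u \<ge> t\<close> by auto
      then show ?thesis using qge[of n] t by (auto simp: ct_def)
    qed
    then show "(\<lambda>n. X (ct t (q n u)) \<omega>) \<longlonglongrightarrow> X (ct t u) \<omega>" by simp
  next
    case False
    then have u: "0 \<le> u" "u < t" by auto
    have ev: "eventually (\<lambda>n. q n u < t) sequentially" by (rule order_tendstoD(2)[OF qc u(2)])
    have "continuous (at u within {u..}) (\<lambda>v. X v \<omega>)"
      using Xc[OF \<omega> u] by (simp add: at_within_Ici_at_right)
    then have "((\<lambda>v. X v \<omega>) \<circ> (\<lambda>n. q n u)) \<longlonglongrightarrow> X u \<omega>"
      unfolding continuous_within_sequentially using qc qge by auto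
    then have lim: "(\<lambda>n. X (q n u) \<omega>) \<longlonglongrightarrow> X (ct t u) \<omega>" using u by (simp add: comp_def ct_id)
    show "(\<lambda>n. X (ct t (q n u)) \<omega>) \<longlonglongrightarrow> X (ct t u) \<omega>"
    proof (rule Lim_transform_eventually[OF lim])
      show "eventually (\<lambda>n. X (q n u) \<omega> = X (ct t (q n u)) \<omega>) sequentially"
        using ev proof eventually_elim
        case (elim n)
        then have "q n u \<in> {0..t}" using qge[of n] u by auto
        then show ?case by (simp add: ct_id)
      qed
    qed
  qed
qed

abbreviation PS :: "real \<Rightarrow> (real \<Rightarrow> real) measure" where
  "PS t \<equiv> \<Pi>\<^sub>M s\<in>{0..t}. (borel :: real measure)"

lemma path_meas:
  assumes "\<And>u. X u \<in> borel_measurable M"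
  shows "(\<lambda>\<omega>. restrict (\<lambda>s. X s \<omega>) {0..t}) \<in> measurable M (PS t)"
  using assms by (intro measurable_restrict) auto

lemma path_space: "(\<lambda>\<omega>. restrict (\<lambda>s. X s \<omega>) {0..t}) \<in> space M \<rightarrow> space (PS t)"
  by (auto simp: space_PiM)

lemma natfilt_space: "space (natfilt M X t) = space M"
  by (simp add: natfilt_def)

lemma natfilt_path: "(\<lambda>\<omega>. restrict (\<lambda>s. X s \<omega>) {0..t}) \<in> measurable (natfilt M X t) (PS t)"
  unfolding natfilt_def by (rule measurable_vimage_algebra1[OF path_space])

lemma natfilt_meas:
  assumes "u \<in> {0..t}"
  shows "X u \<in> borel_measurable (natfilt M X t)"
proof -
  have "(\<lambda>\<omega>. (restrict (\<lambda>s. X s \<omega>) {0..t}) u) \<in> borel_measurable (natfilt M X t)"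
    by (rule measurable_compose[OF natfilt_path measurable_component_singleton[OF assms]])
  then show ?thesis using assms by simp
qed

lemma natfilt_sets:
  assumes "A \<in> sets (natfilt M X s)"
  obtains B where "B \<in> sets (PS s)" "A = (\<lambda>\<omega>. restrict (\<lambda>u. X u \<omega>) {0..s}) -` B \<inter> space M"
  using assms unfolding natfilt_def sets_vimage_algebra2[OF path_space] by blast

lemma natfilt_sub:
  assumes "\<And>u. X u \<in> borel_measurable M" "A \<in> sets (natfilt M X s)"
  shows "A \<in> sets M"
proof -
  obtain B where B: "B \<in> sets (PS s)" "A = (\<lambda>\<omega>. restrict (\<lambda>u. X u \<omega>) {0..s}) -` B \<inter> space M"
    using natfilt_sets[OF assms(2)] by blast
  show ?thesis unfolding B(2) by (rule measurable_sets[OF path_meas[OF assms(1)] B(1)])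
qed

lemma transfer:
  fixes M :: "'a measure" and N :: "'b measure" and R :: "real \<Rightarrow> 'a \<Rightarrow> real" and Rh :: "real \<Rightarrow> 'b \<Rightarrow> real"
  assumes M: "prob_space M" and N: "prob_space N"
    and Rm: "\<And>u. R u \<in> borel_measurable M" and Rhm: "\<And>u. Rh u \<in> borel_measurable N"
    and Rr: "\<And>\<omega>. \<omega> \<in> space M \<Longrightarrow> R t \<omega> \<in> {0..1}"
    and t: "t \<ge> 0" and c0: "c0 > 0"
    and Hc: "continuous_on {0..1} Ht" and Hp: "\<And>x. x \<in> {0..1} \<Longrightarrow> Ht x \<ge> 0"
    and law: "\<And>A. A \<in> sets (PS t) \<Longrightarrow>
        measure N {\<omega> \<in> space N. restrict (\<lambda>s. Rh s \<omega>) {0..t} \<in> A}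
        = (\<integral>\<omega>. indicator A (restrict (\<lambda>s. R s \<omega>) {0..t}) * Ht (R t \<omega>) \<partial>M) / c0"
    and g: "g \<in> borel_measurable (PS t)"
  shows "(\<integral>\<omega>. g (restrict (\<lambda>s. Rh s \<omega>) {0..t}) \<partial>N)
       = (\<integral>\<omega>. g (restrict (\<lambda>s. R s \<omega>) {0..t}) * Ht (R t \<omega>) \<partial>M) / c0"
proof -
  interpret M: prob_space M by (rule M)
  interpret N: prob_space N by (rule N)
  define P where "P = (\<lambda>\<omega>. restrict (\<lambda>s. R s \<omega>) {0..t})"
  define Ph where "Ph = (\<lambda>\<omega>. restrict (\<lambda>s. Rh s \<omega>) {0..t})"
  have Pm: "P \<in> measurable M (PS t)" unfolding P_def by (rule path_meas[OF Rm])
  have Phm: "Ph \<in> measurable N (PS t)" unfolding Ph_def by (rule path_meas[OF Rhm])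
  define Hc' where "Hc' = (\<lambda>x. Ht (cl x))"
  have Hc'c: "continuous_on UNIV Hc'" unfolding Hc'_def by (rule cont_comp_cl[OF Hc])
  have Hc'm: "Hc' \<in> borel_measurable borel" by (rule borel_measurable_continuous_onI[OF Hc'c])
  have Hc'p: "Hc' x \<ge> 0" for x unfolding Hc'_def using Hp cl_in by blast
  obtain BH where BH: "\<forall>x\<in>{0..1}. \<bar>Ht x\<bar> \<le> BH" using cont_bounded01[OF Hc] by blast
  have Hc'b: "\<bar>Hc' x\<bar> \<le> BH" for x unfolding Hc'_def using BH cl_in by blast
  define dens where "dens = (\<lambda>p::real \<Rightarrow> real. Hc' (p t) / c0)"
  have densm: "dens \<in> borel_measurable (PS t)"
  proof -
    have "(\<lambda>p::real \<Rightarrow> real. p t) \<in> measurable (PS t) borel"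
      using t by (intro measurable_component_singleton) auto
    from measurable_compose[OF this Hc'm] show ?thesis
      unfolding dens_def by (intro borel_measurable_divide) auto
  qed
  have densP: "dens (P \<omega>) = Ht (R t \<omega>) / c0" if "\<omega> \<in> space M" for \<omega>
    unfolding dens_def P_def Hc'_def using t Rr[OF that] by (simp add: cl_id)
  define D where "D = density (distr M (PS t) P) (\<lambda>p. ennreal (dens p))"
  define L where "L = distr N (PS t) Ph"
  have LD: "L = D"
  proof (rule measure_eqI)
    show "sets L = sets D" unfolding L_def D_def by simp
    fix A assume "A \<in> sets L"
    then have A: "A \<in> sets (PS t)" unfolding L_def by simp
    have "emeasure L A = emeasure N (Ph -` A \<inter> space N)" unfolding L_def by (rule emeasure_distr[OF Phm A])
    also have "\<dots> = ennreal (measure N (Ph -` A \<inter> space N))" by (simp add: N.emeasure_eq_measure)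
    also have "Ph -` A \<inter> space N = {\<omega> \<in> space N. restrict (\<lambda>s. Rh s \<omega>) {0..t} \<in> A}" unfolding Ph_def by auto
    also have "measure N \<dots> = (\<integral>\<omega>. indicator A (P \<omega>) * Ht (R t \<omega>) \<partial>M) / c0" unfolding P_def by (rule law[OF A])
    also have "\<dots> = (\<integral>\<omega>. indicator A (P \<omega>) * dens (P \<omega>) \<partial>M)"
    proof -
      have "(\<integral>\<omega>. indicator A (P \<omega>) * dens (P \<omega>) \<partial>M) = (\<integral>\<omega>. indicator A (P \<omega>) * Ht (R t \<omega>) / c0 \<partial>M)"
        by (rule Bochner_Integration.integral_cong) (auto simp: densP)
      also have "\<dots> = (\<integral>\<omega>. indicator A (P \<omega>) * Ht (R t \<omega>) \<partial>M) / c0" by simp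
      finally show ?thesis by simp
    qed
    also have "ennreal \<dots> = (\<integral>\<^sup>+\<omega>. indicator A (P \<omega>) * dens (P \<omega>) \<partial>M)"
    proof (rule nn_integral_eq_integral[symmetric])
      have m: "(\<lambda>\<omega>. indicator A (P \<omega>) * dens (P \<omega>)) \<in> borel_measurable M"
        using Pm densm A by measurable
      show "integrable M (\<lambda>\<omega>. indicator A (P \<omega>) * dens (P \<omega>))"
      proof (rule M.integrable_const_bound[OF _ m, where B="BH / c0"])
        show "AE \<omega> in M. norm (indicator A (P \<omega>) * dens (P \<omega>)) \<le> BH / c0"
        proof (rule AE_I2)
          fix \<omega> have "\<bar>dens (P \<omega>)\<bar> \<le> BH / c0" unfolding dens_def using Hc'b c0 by (simp add: divide_right_mono abs_div)
          then show "norm (indicator A (P \<omega>) * dens (P \<omega>)) \<le> BH / c0"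
            using c0 by (auto simp: indicator_def abs_mult order_trans[OF _ \<open>\<bar>dens (P \<omega>)\<bar> \<le> _\<close>] intro: order_trans[OF abs_ge_zero])
        qed
      qed
      show "AE \<omega> in M. 0 \<le> indicator A (P \<omega>) * dens (P \<omega>)"
        using Hc'p c0 by (intro AE_I2) (simp add: dens_def)
    qed
    also have "\<dots> = (\<integral>\<^sup>+\<omega>. ennreal (dens (P \<omega>)) * indicator A (P \<omega>) \<partial>M)"
      by (rule nn_integral_cong) (auto simp: indicator_def)
    also have "\<dots> = (\<integral>\<^sup>+p. ennreal (dens p) * indicator A p \<partial>distr M (PS t) P)"
    proof (rule nn_integral_distr[OF Pm, symmetric])
      note [measurable] = densm A
      show "(\<lambda>p. ennreal (dens p) * indicator A p) \<in> borel_measurable (distr M (PS t) P)"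
        by measurable
    qed
    also have "\<dots> = emeasure D A" unfolding D_def using densm A by (subst emeasure_density) auto
    finally show "emeasure L A = emeasure D A" .
  qed
  have "(\<integral>\<omega>. g (Ph \<omega>) \<partial>N) = integral\<^sup>L L g" unfolding L_def by (rule integral_distr[OF Phm g, symmetric])
  also have "\<dots> = integral\<^sup>L D g" by (simp add: LD)
  also have "\<dots> = (\<integral>p. dens p *\<^sub>R g p \<partial>distr M (PS t) P)"
    unfolding D_def by (rule integral_density) (use g densm Hc'p c0 in \<open>auto simp: dens_def\<close>)
  also have "\<dots> = (\<integral>\<omega>. dens (P \<omega>) * g (P \<omega>) \<partial>M)"
    by (subst integral_distr[OF Pm]) (use g densm in auto)
  also have "\<dots> = (\<integral>\<omega>. g (P \<omega>) * Ht (R t \<omega>) / c0 \<partial>M)"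
    by (rule Bochner_Integration.integral_cong) (auto simp: densP)
  also have "\<dots> = (\<integral>\<omega>. g (P \<omega>) * Ht (R t \<omega>) \<partial>M) / c0" by simp
  finally show ?thesis unfolding P_def Ph_def .
qed

lemma int_bdd:
  fixes f :: "real \<Rightarrow> real"
  assumes "a \<le> b" "f \<in> borel_measurable borel" "\<And>u. u \<in> {a<..b} \<Longrightarrow> \<bar>f u\<bar> \<le> C"
  shows "integrable lborel (\<lambda>u. indicator {a<..b} u * f u)"
proof (rule Bochner_Integration.integrable_bound)
  show "integrable lborel (\<lambda>u. \<bar>C\<bar> * indicator {a<..b} u)"
    using assms(1) by (intro integrable_mult_right integrable_real_indicator) auto
  show "(\<lambda>u. indicator {a<..b} u * f u) \<in> borel_measurable lborel" using assms(2) by measurable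
  show "AE x in lborel. norm (indicator {a<..b} x * f x) \<le> norm (\<bar>C\<bar> * indicator {a<..b} x)"
  proof (rule AE_I2)
    fix x show "norm (indicator {a<..b} x * f x) \<le> norm (\<bar>C\<bar> * indicator {a<..b} x)"
    proof (cases "x \<in> {a<..b}")
      case True
      have "\<bar>f x\<bar> \<le> C" by (rule assms(3)[OF True])
      also have "C \<le> \<bar>C\<bar>" by (rule abs_ge_self)
      finally show ?thesis using True by simp
    qed simp
  qed
qed

lemma int_prod_bdd:
  fixes f :: "real \<times> 'b \<Rightarrow> real"
  assumes sf: "sigma_finite_measure M2" and fm: "f \<in> borel_measurable (lborel \<Otimes>\<^sub>M M2)"
    and B: "B \<in> sets M2" "emeasure M2 B < \<infinity>" and ab: "a \<le> b"
    and bnd: "\<And>(u::real) \<omega>. \<omega> \<in> space M2 \<Longrightarrow> \<bar>f (u, \<omega>)\<bar> \<le> C * indicator ({a<..b} \<times> B) (u, \<omega>)"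
  shows "integrable (lborel \<Otimes>\<^sub>M M2) f"
proof (rule Bochner_Integration.integrable_bound)
  interpret M2: sigma_finite_measure M2 by (rule sf)
  have "emeasure (lborel \<Otimes>\<^sub>M M2) ({a<..b} \<times> B) = emeasure lborel {a<..b} * emeasure M2 B"
    by (rule M2.emeasure_pair_measure_Times) (use B in auto)
  also have "\<dots> < \<infinity>" using ab B by (simp add: ennreal_mult_less_top)
  finally have fin: "emeasure (lborel \<Otimes>\<^sub>M M2) ({a<..b} \<times> B) < \<infinity>" .
  show "integrable (lborel \<Otimes>\<^sub>M M2) (\<lambda>p. \<bar>C\<bar> * indicator ({a<..b} \<times> B) p)"
    using fin B by (intro integrable_mult_right integrable_real_indicator) auto
  show "f \<in> borel_measurable (lborel \<Otimes>\<^sub>M M2)" by (rule fm)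
  show "AE p in lborel \<Otimes>\<^sub>M M2. norm (f p) \<le> norm (\<bar>C\<bar> * indicator ({a<..b} \<times> B) p)"
  proof (rule AE_I2)
    fix p :: "real \<times> 'b" assume "p \<in> space (lborel \<Otimes>\<^sub>M M2)"
    then obtain u \<omega> where p: "p = (u, \<omega>)" "\<omega> \<in> space M2" by (cases p) (auto simp: space_pair_measure)
    have "\<bar>f (u, \<omega>)\<bar> \<le> C * indicator ({a<..b} \<times> B) (u, \<omega>)" by (rule bnd[OF p(2)])
    also have "\<dots> \<le> \<bar>C\<bar> * indicator ({a<..b} \<times> B) (u, \<omega>)"
      by (intro mult_right_mono) auto
    finally show "norm (f p) \<le> norm (\<bar>C\<bar> * indicator ({a<..b} \<times> B) p)" using p by (simp add: indicator_def)
  qed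
qed

lemma ftc_exp:
  fixes a b r :: real
  assumes "a \<le> b"
  shows "(\<integral>u. indicator {a<..b} u * (r * exp (r * u)) \<partial>lborel) = exp (r * b) - exp (r * a)"
proof -
  have "(\<integral>u. indicator {a..b} u *\<^sub>R (r * exp (r * u)) \<partial>lborel) = exp (r * b) - exp (r * a)"
  proof (rule integral_FTC_atLeastAtMost[OF assms])
    fix x assume "a \<le> x" "x \<le> b"
    have "((\<lambda>u. exp (r * u)) has_real_derivative exp (r * x) * r) (at x within {a..b})"
      by (auto intro!: derivative_eq_intros)
    then show "((\<lambda>u. exp (r * u)) has_vector_derivative r * exp (r * x)) (at x within {a..b})"
      by (simp add: has_real_derivative_iff_has_vector_derivative mult.commute)
  next
    show "continuous_on {a..b} (\<lambda>u. r * exp (r * u))" by (intro continuous_intros)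
  qed
  moreover have "(\<integral>u. indicator {a<..b} u * (r * exp (r * u)) \<partial>lborel) = (\<integral>u. indicator {a..b} u *\<^sub>R (r * exp (r * u)) \<partial>lborel)"
  proof (rule integral_cong_AE)
    show "AE x in lborel. indicator {a<..b} x * (r * exp (r * x)) = indicator {a..b} x *\<^sub>R (r * exp (r * x))"
      using AE_lborel_singleton[of a] by eventually_elim (auto simp: indicator_def)
  qed measurable
  ultimately show ?thesis by simp
qed

lemma exp_bound:
  fixes u r s t :: real
  shows "u \<in> {s<..t} \<Longrightarrow> \<bar>exp (r * u)\<bar> \<le> exp (\<bar>r\<bar> * (\<bar>s\<bar> + \<bar>t\<bar>))"
proof -
  assume u: "u \<in> {s<..t}"
  have "r * u \<le> \<bar>r * u\<bar>" by (rule abs_ge_self)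
  also have "\<bar>r * u\<bar> = \<bar>r\<bar> * \<bar>u\<bar>" by (rule abs_mult)
  also have "\<bar>u\<bar> \<le> \<bar>s\<bar> + \<bar>t\<bar>" using u by auto
  then have "\<bar>r\<bar> * \<bar>u\<bar> \<le> \<bar>r\<bar> * (\<bar>s\<bar> + \<bar>t\<bar>)" by (intro mult_left_mono) auto
  finally show ?thesis by simp
qed

lemma TRI:
  fixes m g :: "real \<Rightarrow> real"
  assumes st: "s \<le> t" and gm: "g \<in> borel_measurable borel" and gb: "\<And>v. \<bar>g v\<bar> \<le> B"
    and mrep: "\<And>u. u \<in> {s..t} \<Longrightarrow> m u = m s + (\<integral>v. indicator {s<..u} v * g v \<partial>lborel)"
  shows "exp (r * t) * m t - exp (r * s) * m s
       = (\<integral>u. indicator {s<..t} u * (exp (r * u) * (g u + r * m u)) \<partial>lborel)"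
proof -
  note gm[measurable]
  define G where "G u = (\<integral>v. indicator {s<..u} v * g v \<partial>lborel)" for u
  define E where "E = exp (\<bar>r\<bar> * (\<bar>s\<bar> + \<bar>t\<bar>))"
  have eb: "\<And>u. u \<in> {s<..t} \<Longrightarrow> \<bar>exp (r * u)\<bar> \<le> E" unfolding E_def by (rule exp_bound)
  have B0: "B \<ge> 0" using gb[of 0] by linarith
  have E0: "E \<ge> 0" unfolding E_def by simp
  have Gb: "\<bar>G u\<bar> \<le> B * (t - s)" if "u \<in> {s..t}" for u
  proof -
    have "\<bar>G u\<bar> \<le> (\<integral>v. \<bar>indicator {s<..u} v * g v\<bar> \<partial>lborel)"
      unfolding G_def by (rule integral_abs_bound)
    also have "\<dots> \<le> (\<integral>v. B * indicator {s<..u} v \<partial>lborel)"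
    proof (rule integral_mono)
      show "integrable lborel (\<lambda>v. \<bar>indicator {s<..u} v * g v\<bar>)"
        using int_bdd[of s u g B] that gb by (intro integrable_abs) auto
      show "integrable lborel (\<lambda>v. B * indicator {s<..u} v)" using that by (intro integrable_mult_right integrable_real_indicator) auto
      show "\<bar>indicator {s<..u} v * g v\<bar> \<le> B * indicator {s<..u} v" for v
        using gb[of v] by (auto simp: indicator_def)
    qed
    also have "\<dots> = B * (u - s)" using that by simp
    also have "\<dots> \<le> B * (t - s)" using that B0 by (intro mult_left_mono) auto
    finally show ?thesis .
  qed
  have Gmeas: "G \<in> borel_measurable borel"
  proof -
    have "(\<lambda>(u, v). indicator {s<..u} v * g v) \<in> borel_measurable (borel \<Otimes>\<^sub>M lborel)"
    proof -
      have "(\<lambda>p::real\<times>real. (if s < snd p \<and> snd p \<le> fst p then g (snd p) else 0)) \<in> borel_measurable (borel \<Otimes>\<^sub>M lborel)"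
        by measurable
      moreover have "(\<lambda>(u, v). indicator {s<..u} v * g v) = (\<lambda>p::real\<times>real. (if s < snd p \<and> snd p \<le> fst p then g (snd p) else 0))"
        by (auto simp: indicator_def fun_eq_iff)
      ultimately show ?thesis by simp
    qed
    then show ?thesis unfolding G_def by (rule lborel.borel_measurable_lebesgue_integral)
  qed
  note Gmeas[measurable]
  have I1: "integrable lborel (\<lambda>u. indicator {s<..t} u * (exp (r * u) * g u))"
    by (rule int_bdd[OF st _, where C="E * B"]) (use eb gb E0 B0 in \<open>auto simp: abs_mult intro: mult_mono\<close>)
  have I2: "integrable lborel (\<lambda>u. indicator {s<..t} u * (r * exp (r * u) * m s))"
    by (rule int_bdd[OF st _, where C="\<bar>r\<bar> * E * \<bar>m s\<bar>"]) (use eb E0 in \<open>auto simp: abs_mult intro!: mult_mono mult_right_mono\<close>)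
  have I3: "integrable lborel (\<lambda>u. indicator {s<..t} u * (r * exp (r * u) * G u))"
  proof (rule int_bdd[OF st _, where C="\<bar>r\<bar> * E * (B * (t - s))"])
    fix u assume u: "u \<in> {s<..t}"
    have "\<bar>r * exp (r * u) * G u\<bar> = \<bar>r\<bar> * \<bar>exp (r * u)\<bar> * \<bar>G u\<bar>" by (simp add: abs_mult)
    also have "\<dots> \<le> \<bar>r\<bar> * E * (B * (t - s))"
      using eb[OF u] Gb[of u] u E0 by (intro mult_mono mult_left_mono) auto
    finally show "\<bar>r * exp (r * u) * G u\<bar> \<le> \<bar>r\<bar> * E * (B * (t - s))" .
  qed measurable
  have A: "(\<integral>u. indicator {s<..t} u * (exp (r * u) * (g u + r * m u)) \<partial>lborel)
     = (\<integral>u. indicator {s<..t} u * (exp (r * u) * g u) + indicator {s<..t} u * (r * exp (r * u) * m s)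
            + indicator {s<..t} u * (r * exp (r * u) * G u) \<partial>lborel)"
  proof (rule Bochner_Integration.integral_cong[OF refl])
    fix u show "indicator {s<..t} u * (exp (r * u) * (g u + r * m u))
     = indicator {s<..t} u * (exp (r * u) * g u) + indicator {s<..t} u * (r * exp (r * u) * m s)
            + indicator {s<..t} u * (r * exp (r * u) * G u)"
    proof (cases "u \<in> {s<..t}")
      case True
      then have "m u = m s + G u" using mrep[of u] unfolding G_def by auto
      then show ?thesis using True by (simp add: algebra_simps)
    qed simp
  qed
  also have "\<dots> = (\<integral>u. indicator {s<..t} u * (exp (r * u) * g u) \<partial>lborel)
      + (\<integral>u. indicator {s<..t} u * (r * exp (r * u) * m s) \<partial>lborel)
      + (\<integral>u. indicator {s<..t} u * (r * exp (r * u) * G u) \<partial>lborel)"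
    using I1 I2 I3 by simp
  finally have A: "(\<integral>u. indicator {s<..t} u * (exp (r * u) * (g u + r * m u)) \<partial>lborel)
     = (\<integral>u. indicator {s<..t} u * (exp (r * u) * g u) \<partial>lborel)
      + (\<integral>u. indicator {s<..t} u * (r * exp (r * u) * m s) \<partial>lborel)
      + (\<integral>u. indicator {s<..t} u * (r * exp (r * u) * G u) \<partial>lborel)" .
  have Bst: "(\<integral>u. indicator {s<..t} u * (r * exp (r * u) * m s) \<partial>lborel) = m s * (exp (r * t) - exp (r * s))"
  proof -
    have "(\<integral>u. indicator {s<..t} u * (r * exp (r * u) * m s) \<partial>lborel)
        = (\<integral>u. (indicator {s<..t} u * (r * exp (r * u))) * m s \<partial>lborel)"
      by (simp add: mult.assoc)
    also have "\<dots> = (\<integral>u. indicator {s<..t} u * (r * exp (r * u)) \<partial>lborel) * m s"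
      by (rule integral_mult_left_zero)
    also have "\<dots> = m s * (exp (r * t) - exp (r * s))" by (simp add: ftc_exp[OF st])
    finally show ?thesis .
  qed
  define K where "K u v = indicator {s<..t} u * (r * exp (r * u)) * (indicator {s<..u} v * g v)" for u v :: real
  have Kint: "integrable (lborel \<Otimes>\<^sub>M lborel) (case_prod K)"
  proof (rule int_prod_bdd[OF lborel.sigma_finite_measure_axioms _ _ _ st, where B="{s<..t}" and C="\<bar>r\<bar> * E * B"])
    have "case_prod K = (\<lambda>p::real\<times>real. indicator {s<..t} (fst p) * (r * exp (r * fst p)) *
        (if s < snd p \<and> snd p \<le> fst p then g (snd p) else 0))"
      by (auto simp: K_def indicator_def fun_eq_iff)
    moreover have "\<dots> \<in> borel_measurable (lborel \<Otimes>\<^sub>M lborel)" by measurable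
    ultimately show "case_prod K \<in> borel_measurable (lborel \<Otimes>\<^sub>M lborel)" by simp
    show "emeasure lborel {s<..t} < \<infinity>" using st by simp
    fix u v :: real
    show "\<bar>case_prod K (u, v)\<bar> \<le> \<bar>r\<bar> * E * B * indicator ({s<..t} \<times> {s<..t}) (u, v)"
    proof (cases "u \<in> {s<..t} \<and> v \<in> {s<..u}")
      case True
      then have uv: "u \<in> {s<..t}" "v \<in> {s<..t}" by auto
      have "\<bar>case_prod K (u, v)\<bar> = \<bar>r\<bar> * \<bar>exp (r * u)\<bar> * \<bar>g v\<bar>" using True by (simp add: K_def abs_mult)
      also have "\<dots> \<le> \<bar>r\<bar> * E * B" using eb[OF uv(1)] gb[of v] E0 by (intro mult_mono mult_left_mono) auto
      finally show ?thesis using uv by simp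
    next
      case False
      then have "case_prod K (u, v) = 0" by (auto simp: K_def indicator_def)
      then show ?thesis using E0 B0 by (simp add: indicator_def)
    qed
  qed simp
  have C1: "(\<integral>u. indicator {s<..t} u * (r * exp (r * u) * G u) \<partial>lborel) = (\<integral>u. (\<integral>v. K u v \<partial>lborel) \<partial>lborel)"
  proof (rule Bochner_Integration.integral_cong[OF refl])
    fix u show "indicator {s<..t} u * (r * exp (r * u) * G u) = (\<integral>v. K u v \<partial>lborel)"
      unfolding K_def G_def by (subst integral_mult_right_zero) (simp add: mult.assoc)
  qed
  also have "\<dots> = (\<integral>v. (\<integral>u. K u v \<partial>lborel) \<partial>lborel)"
    by (rule lborel_pair.Fubini_integral[OF Kint, symmetric])
  also have "\<dots> = (\<integral>v. indicator {s<..t} v * g v * (exp (r * t) - exp (r * v)) \<partial>lborel)"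
  proof (rule Bochner_Integration.integral_cong[OF refl])
    fix v
    have "(\<integral>u. K u v \<partial>lborel) = (\<integral>u. (indicator {s<..t} v * g v) * (indicator {v<..t} u * (r * exp (r * u))) \<partial>lborel)"
    proof (rule integral_cong_AE)
      show "AE u in lborel. K u v = (indicator {s<..t} v * g v) * (indicator {v<..t} u * (r * exp (r * u)))"
        using AE_lborel_singleton[of v] by eventually_elim (auto simp: K_def indicator_def)
    next
      have "(\<lambda>u. K u v) = (\<lambda>u. indicator {s<..t} u * (r * exp (r * u)) * (if s < v \<and> v \<le> u then g v else 0))"
        by (auto simp: K_def indicator_def fun_eq_iff)
      moreover have "\<dots> \<in> borel_measurable lborel" by measurable
      ultimately show "(\<lambda>u. K u v) \<in> borel_measurable lborel" by simp
    qed auto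
    also have "\<dots> = indicator {s<..t} v * g v * (exp (r * t) - exp (r * v))"
    proof (cases "v \<in> {s<..t}")
      case True
      then show ?thesis by (subst integral_mult_right_zero) (simp add: ftc_exp)
    qed simp
    finally show "(\<integral>u. K u v \<partial>lborel) = indicator {s<..t} v * g v * (exp (r * t) - exp (r * v))" .
  qed
  also have "\<dots> = (\<integral>v. exp (r * t) * (indicator {s<..t} v * g v) - indicator {s<..t} v * (exp (r * v) * g v) \<partial>lborel)"
    by (rule Bochner_Integration.integral_cong[OF refl]) (simp add: algebra_simps)
  also have "\<dots> = exp (r * t) * G t - (\<integral>v. indicator {s<..t} v * (exp (r * v) * g v) \<partial>lborel)"
  proof -
    have "integrable lborel (\<lambda>v. indicator {s<..t} v * g v)" using int_bdd[OF st gm, of B] gb by auto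
    then show ?thesis using I1 unfolding G_def by simp
  qed
  finally have C: "(\<integral>u. indicator {s<..t} u * (r * exp (r * u) * G u) \<partial>lborel)
      = exp (r * t) * G t - (\<integral>v. indicator {s<..t} v * (exp (r * v) * g v) \<partial>lborel)" .
  have mt: "m t = m s + G t" using mrep[of t] st unfolding G_def by auto
  show ?thesis unfolding A Bst C mt by (simp add: algebra_simps)
qed

lemma joint_q:
  fixes X :: "real \<Rightarrow> 'a \<Rightarrow> real" and q :: "real \<Rightarrow> real"
  assumes t: "t \<ge> 0"
    and Xm: "\<And>u. u \<in> {0..t} \<Longrightarrow> X u \<in> borel_measurable F"
    and Xc: "\<And>\<omega> u. \<omega> \<in> space F \<Longrightarrow> 0 \<le> u \<Longrightarrow> u < t \<Longrightarrow> continuous (at_right u) (\<lambda>v. X v \<omega>)"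
    and q: "continuous_on UNIV q"
  shows "(\<lambda>p. q (X (ct t (fst p)) (snd p))) \<in> borel_measurable (lborel \<Otimes>\<^sub>M F)"
  using measurable_compose[OF joint_meas[OF t Xm Xc] borel_measurable_continuous_onI[OF q]] by simp

lemma integ_meas:
  fixes X :: "real \<Rightarrow> 'a \<Rightarrow> real" and q :: "real \<Rightarrow> real"
  assumes t: "t \<ge> 0"
    and Xm: "\<And>u. u \<in> {0..t} \<Longrightarrow> X u \<in> borel_measurable F"
    and Xc: "\<And>\<omega> u. \<omega> \<in> space F \<Longrightarrow> 0 \<le> u \<Longrightarrow> u < t \<Longrightarrow> continuous (at_right u) (\<lambda>v. X v \<omega>)"
    and q: "continuous_on UNIV q"
  shows "(\<lambda>\<omega>. \<integral>v. indicator {0..t} v * q (X v \<omega>) \<partial>lborel) \<in> borel_measurable F"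
proof -
  have J: "(\<lambda>p. q (X (ct t (fst p)) (snd p))) \<in> borel_measurable (lborel \<Otimes>\<^sub>M F)"
    by (rule joint_q[OF t Xm Xc q])
  have "(\<lambda>p. indicator {0..t} (fst p) * q (X (ct t (fst p)) (snd p))) \<in> borel_measurable (lborel \<Otimes>\<^sub>M F)"
  proof (rule borel_measurable_times[OF _ J])
    show "(\<lambda>p. indicator {0..t} (fst p) :: real) \<in> borel_measurable (lborel \<Otimes>\<^sub>M F)"
      by (intro measurable_compose[OF measurable_fst] borel_measurable_indicator) auto
  qed
  then have "(\<lambda>(\<omega>, v). indicator {0..t} v * q (X (ct t v) \<omega>)) \<in> borel_measurable (F \<Otimes>\<^sub>M lborel)"
    by (subst measurable_pair_swap_iff) (simp add: case_prod_beta')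
  then have "(\<lambda>\<omega>. \<integral>v. indicator {0..t} v * q (X (ct t v) \<omega>) \<partial>lborel) \<in> borel_measurable F"
    by (rule lborel.borel_measurable_lebesgue_integral)
  moreover have "(\<lambda>\<omega>. \<integral>v. indicator {0..t} v * q (X (ct t v) \<omega>) \<partial>lborel) = (\<lambda>\<omega>. \<integral>v. indicator {0..t} v * q (X v \<omega>) \<partial>lborel)"
    by (intro ext Bochner_Integration.integral_cong) (auto simp: indicator_def ct_id)
  ultimately show ?thesis by simp
qed

lemma fub:
  fixes X :: "real \<Rightarrow> 'a \<Rightarrow> real" and q :: "real \<Rightarrow> real"
  assumes M: "prob_space M" and t: "t \<ge> 0"
    and Xm: "\<And>u. u \<in> {0..t} \<Longrightarrow> X u \<in> borel_measurable M"
    and Xc: "\<And>\<omega> u. \<omega> \<in> space M \<Longrightarrow> 0 \<le> u \<Longrightarrow> u < t \<Longrightarrow> continuous (at_right u) (\<lambda>v. X v \<omega>)"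
    and q: "continuous_on UNIV q" and qb: "\<And>x. \<bar>q x\<bar> \<le> C"
    and A: "A \<in> sets M" and ab: "0 \<le> a" "a \<le> b" "b \<le> t"
  shows "(\<integral>\<omega>. indicator A \<omega> * (\<integral>v. indicator {a<..b} v * q (X v \<omega>) \<partial>lborel) \<partial>M)
       = (\<integral>v. indicator {a<..b} v * (\<integral>\<omega>. indicator A \<omega> * q (X (ct t v) \<omega>) \<partial>M) \<partial>lborel)"
    and "(\<lambda>v. \<integral>\<omega>. indicator A \<omega> * q (X (ct t v) \<omega>) \<partial>M) \<in> borel_measurable borel"
proof -
  interpret M: prob_space M by (rule M)
  interpret P: pair_sigma_finite lborel M
    by (intro pair_sigma_finite.intro lborel.sigma_finite_measure_axioms M.sigma_finite_measure_axioms)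
  have J: "(\<lambda>p. q (X (ct t (fst p)) (snd p))) \<in> borel_measurable (lborel \<Otimes>\<^sub>M M)"
    by (rule joint_q[OF t Xm Xc q])
  note J[measurable] A[measurable]
  define f where "f v \<omega> = indicator {a<..b} v * (indicator A \<omega> * q (X (ct t v) \<omega>))" for v \<omega>
  have fm: "case_prod f \<in> borel_measurable (lborel \<Otimes>\<^sub>M M)"
  proof -
    have "(\<lambda>p. indicator {a<..b} (fst p) * (indicator A (snd p) * q (X (ct t (fst p)) (snd p)))) \<in> borel_measurable (lborel \<Otimes>\<^sub>M M)"
    proof (intro borel_measurable_times J)
      show "(\<lambda>p. indicator {a<..b} (fst p) :: real) \<in> borel_measurable (lborel \<Otimes>\<^sub>M M)"
        by (intro measurable_compose[OF measurable_fst] borel_measurable_indicator) auto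
      show "(\<lambda>p. indicator A (snd p) :: real) \<in> borel_measurable (lborel \<Otimes>\<^sub>M M)"
        by (intro measurable_compose[OF measurable_snd] borel_measurable_indicator A)
    qed
    then show ?thesis unfolding f_def by (simp add: case_prod_beta')
  qed
  have fi: "integrable (lborel \<Otimes>\<^sub>M M) (case_prod f)"
  proof (rule int_prod_bdd[OF M.sigma_finite_measure_axioms fm _ _ ab(2), where B="space M" and C="\<bar>C\<bar>"])
    fix u \<omega> assume "\<omega> \<in> space M"
    have "\<bar>q (X (ct t u) \<omega>)\<bar> \<le> \<bar>C\<bar>" using qb by (rule order_trans) simp
    then show "\<bar>case_prod f (u, \<omega>)\<bar> \<le> \<bar>C\<bar> * indicator ({a<..b} \<times> space M) (u, \<omega>)"
      using \<open>\<omega> \<in> space M\<close> by (auto simp: f_def indicator_def abs_mult)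
  qed (auto simp: M.emeasure_space_1)
  have "(\<integral>\<omega>. indicator A \<omega> * (\<integral>v. indicator {a<..b} v * q (X v \<omega>) \<partial>lborel) \<partial>M) = (\<integral>\<omega>. (\<integral>v. f v \<omega> \<partial>lborel) \<partial>M)"
  proof (rule Bochner_Integration.integral_cong[OF refl])
    fix \<omega>
    have "(\<integral>v. f v \<omega> \<partial>lborel) = indicator A \<omega> * (\<integral>v. indicator {a<..b} v * q (X (ct t v) \<omega>) \<partial>lborel)"
      unfolding f_def by (subst integral_mult_right_zero[symmetric]) (simp add: algebra_simps)
    also have "(\<integral>v. indicator {a<..b} v * q (X (ct t v) \<omega>) \<partial>lborel) = (\<integral>v. indicator {a<..b} v * q (X v \<omega>) \<partial>lborel)"
      using ab by (intro Bochner_Integration.integral_cong) (auto simp: indicator_def ct_id)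
    finally show "indicator A \<omega> * (\<integral>v. indicator {a<..b} v * q (X v \<omega>) \<partial>lborel) = (\<integral>v. f v \<omega> \<partial>lborel)" by simp
  qed
  also have "\<dots> = (\<integral>v. (\<integral>\<omega>. f v \<omega> \<partial>M) \<partial>lborel)" by (rule P.Fubini_integral[OF fi])
  also have "\<dots> = (\<integral>v. indicator {a<..b} v * (\<integral>\<omega>. indicator A \<omega> * q (X (ct t v) \<omega>) \<partial>M) \<partial>lborel)"
    unfolding f_def by simp
  finally show "(\<integral>\<omega>. indicator A \<omega> * (\<integral>v. indicator {a<..b} v * q (X v \<omega>) \<partial>lborel) \<partial>M)
       = (\<integral>v. indicator {a<..b} v * (\<integral>\<omega>. indicator A \<omega> * q (X (ct t v) \<omega>) \<partial>M) \<partial>lborel)" .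
  have "(\<lambda>(v, \<omega>). indicator A \<omega> * q (X (ct t v) \<omega>)) \<in> borel_measurable (lborel \<Otimes>\<^sub>M M)"
  proof -
    have "(\<lambda>p. indicator A (snd p) * q (X (ct t (fst p)) (snd p))) \<in> borel_measurable (lborel \<Otimes>\<^sub>M M)"
    proof (intro borel_measurable_times J)
      show "(\<lambda>p. indicator A (snd p) :: real) \<in> borel_measurable (lborel \<Otimes>\<^sub>M M)"
        by (intro measurable_compose[OF measurable_snd] borel_measurable_indicator A)
    qed
    then show ?thesis by (simp add: case_prod_beta')
  qed
  then show "(\<lambda>v. \<integral>\<omega>. indicator A \<omega> * q (X (ct t v) \<omega>) \<partial>M) \<in> borel_measurable borel"
    using M.borel_measurable_lebesgue_integral[of "\<lambda>v \<omega>. indicator A \<omega> * q (X (ct t v) \<omega>)" lborel] by simp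
qed

lemma transferA:
  fixes M :: "'a measure" and N :: "'b measure" and R :: "real \<Rightarrow> 'a \<Rightarrow> real" and Rh :: "real \<Rightarrow> 'b \<Rightarrow> real"
    and q :: "real \<Rightarrow> real"
  assumes M: "prob_space M" and N: "prob_space N"
    and Rm: "\<And>u. R u \<in> borel_measurable M" and Rhm: "\<And>u. Rh u \<in> borel_measurable N"
    and Rr: "\<And>u \<omega>. \<omega> \<in> space M \<Longrightarrow> R u \<omega> \<in> {0..1}"
    and c0: "c0 > 0"
    and Hc: "\<And>u. continuous_on {0..1} (Hf u)" and Hp: "\<And>u x. x \<in> {0..1} \<Longrightarrow> Hf u x \<ge> 0"
    and law: "\<And>u A. u \<ge> 0 \<Longrightarrow> A \<in> sets (PS u) \<Longrightarrow>
        measure N {\<omega> \<in> space N. restrict (\<lambda>s. Rh s \<omega>) {0..u} \<in> A}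
        = (\<integral>\<omega>. indicator A (restrict (\<lambda>s. R s \<omega>) {0..u}) * Hf u (R u \<omega>) \<partial>M) / c0"
    and su: "0 \<le> s" "s \<le> u" and B: "B \<in> sets (PS s)" and q: "continuous_on UNIV q"
  shows "(\<integral>\<omega>. indicator ((\<lambda>\<omega>. restrict (\<lambda>v. Rh v \<omega>) {0..s}) -` B \<inter> space N) \<omega> * q (Rh u \<omega>) \<partial>N)
       = (\<integral>\<omega>. indicator ((\<lambda>\<omega>. restrict (\<lambda>v. R v \<omega>) {0..s}) -` B \<inter> space M) \<omega> * q (R u \<omega>) * Hf u (R u \<omega>) \<partial>M) / c0"
proof -
  define g where "g p = indicator B (restrict p {0..s}) * q (p u)" for p :: "real \<Rightarrow> real"
  have gm: "g \<in> borel_measurable (PS u)"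
  proof -
    have 1: "(\<lambda>p::real\<Rightarrow>real. restrict p {0..s}) \<in> measurable (PS u) (PS s)"
      using su by (intro measurable_restrict_subset) auto
    have 2: "(\<lambda>p::real\<Rightarrow>real. p u) \<in> measurable (PS u) borel"
      using su by (intro measurable_component_singleton) auto
    have 3: "(\<lambda>p::real\<Rightarrow>real. indicator B (restrict p {0..s}) :: real) \<in> borel_measurable (PS u)"
      by (rule measurable_compose[OF 1 borel_measurable_indicator[OF B]])
    have 4: "(\<lambda>p::real\<Rightarrow>real. q (p u)) \<in> borel_measurable (PS u)"
      by (rule measurable_compose[OF 2 borel_measurable_continuous_onI[OF q]])
    show ?thesis unfolding g_def using 3 4 by (rule borel_measurable_times)
  qed
  have rr: "restrict (restrict f {0..u}) {0..s} = restrict f {0..s}" for f :: "real \<Rightarrow> real"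
    using su by (auto simp: restrict_def fun_eq_iff)
  have T: "(\<integral>\<omega>. g (restrict (\<lambda>v. Rh v \<omega>) {0..u}) \<partial>N)
       = (\<integral>\<omega>. g (restrict (\<lambda>v. R v \<omega>) {0..u}) * Hf u (R u \<omega>) \<partial>M) / c0"
    using su by (intro transfer[OF M N Rm Rhm Rr _ c0 Hc Hp law gm]) auto
  have eN: "(\<integral>\<omega>. indicator ((\<lambda>\<omega>. restrict (\<lambda>v. Rh v \<omega>) {0..s}) -` B \<inter> space N) \<omega> * q (Rh u \<omega>) \<partial>N)
     = (\<integral>\<omega>. g (restrict (\<lambda>v. Rh v \<omega>) {0..u}) \<partial>N)"
    by (rule Bochner_Integration.integral_cong[OF refl]) (use su in \<open>auto simp: g_def rr indicator_def\<close>)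
  have eM: "(\<integral>\<omega>. indicator ((\<lambda>\<omega>. restrict (\<lambda>v. R v \<omega>) {0..s}) -` B \<inter> space M) \<omega> * q (R u \<omega>) * Hf u (R u \<omega>) \<partial>M)
     = (\<integral>\<omega>. g (restrict (\<lambda>v. R v \<omega>) {0..u}) * Hf u (R u \<omega>) \<partial>M)"
    by (rule Bochner_Integration.integral_cong[OF refl]) (use su in \<open>auto simp: g_def rr indicator_def\<close>)
  show ?thesis unfolding eN eM T ..
qed

lemma int_bddS:
  fixes f :: "real \<Rightarrow> real"
  assumes S: "S \<in> sets borel" "emeasure lborel S < \<infinity>" and fm: "f \<in> borel_measurable borel"
    and fb: "\<And>u. u \<in> S \<Longrightarrow> \<bar>f u\<bar> \<le> C"
  shows "integrable lborel (\<lambda>u. indicator S u * f u)"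
proof (rule Bochner_Integration.integrable_bound)
  show "integrable lborel (\<lambda>u. \<bar>C\<bar> * indicator S u)"
    using S by (intro integrable_mult_right integrable_real_indicator) auto
  show "(\<lambda>u. indicator S u * f u) \<in> borel_measurable lborel" using fm S by measurable
  show "AE x in lborel. norm (indicator S x * f x) \<le> norm (\<bar>C\<bar> * indicator S x)"
  proof (rule AE_I2)
    fix x show "norm (indicator S x * f x) \<le> norm (\<bar>C\<bar> * indicator S x)"
    proof (cases "x \<in> S")
      case True
      have "\<bar>f x\<bar> \<le> C" by (rule fb[OF True])
      also have "C \<le> \<bar>C\<bar>" by (rule abs_ge_self)
      finally show ?thesis using True by simp
    qed simp
  qed
qed

lemma ind_split:
  fixes h h' :: "real \<Rightarrow> real"
  assumes st: "0 \<le> s" "s \<le> t" and hm: "h' \<in> borel_measurable borel" and hb: "\<And>v. \<bar>h' v\<bar> \<le> C"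
    and hh': "\<And>v. v \<in> {0..t} \<Longrightarrow> h v = h' v"
  shows "(\<integral>v. indicator {0..t} v * h v \<partial>lborel) - (\<integral>v. indicator {0..s} v * h v \<partial>lborel)
       = (\<integral>v. indicator {s<..t} v * h v \<partial>lborel)"
proof -
  have e1: "(\<integral>v. indicator S v * h v \<partial>lborel) = (\<integral>v. indicator S v * h' v \<partial>lborel)" if "S \<subseteq> {0..t}" for S
    using that hh' by (intro Bochner_Integration.integral_cong) (auto simp: indicator_def)
  have i1: "integrable lborel (\<lambda>v. indicator {0..t} v * h' v)" by (rule int_bddS[OF _ _ hm hb]) (use st in auto)
  have i2: "integrable lborel (\<lambda>v. indicator {0..s} v * h' v)" by (rule int_bddS[OF _ _ hm hb]) (use st in auto)
  have "(\<integral>v. indicator {0..t} v * h' v \<partial>lborel) - (\<integral>v. indicator {0..s} v * h' v \<partial>lborel)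
      = (\<integral>v. indicator {0..t} v * h' v - indicator {0..s} v * h' v \<partial>lborel)"
    using i1 i2 by simp
  also have "\<dots> = (\<integral>v. indicator {s<..t} v * h' v \<partial>lborel)"
    using st by (intro Bochner_Integration.integral_cong) (auto simp: indicator_def)
  moreover have "(\<integral>v. indicator {0..t} v * h v \<partial>lborel) = (\<integral>v. indicator {0..t} v * h' v \<partial>lborel)" by (rule e1) auto
  moreover have "(\<integral>v. indicator {0..s} v * h v \<partial>lborel) = (\<integral>v. indicator {0..s} v * h' v \<partial>lborel)" by (rule e1) (use st in auto)
  moreover have "(\<integral>v. indicator {s<..t} v * h v \<partial>lborel) = (\<integral>v. indicator {s<..t} v * h' v \<partial>lborel)" by (rule e1) (use st in auto)
  ultimately show ?thesis by simp
qed

lemma ind_bound: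
  fixes h h' :: "real \<Rightarrow> real"
  assumes t: "0 \<le> t" and hm: "h' \<in> borel_measurable borel" and hb: "\<And>v. \<bar>h' v\<bar> \<le> C"
    and hh': "\<And>v. v \<in> {0..t} \<Longrightarrow> h v = h' v"
  shows "\<bar>\<integral>v. indicator {0..t} v * h v \<partial>lborel\<bar> \<le> C * t"
proof -
  have "(\<integral>v. indicator {0..t} v * h v \<partial>lborel) = (\<integral>v. indicator {0..t} v * h' v \<partial>lborel)"
    using hh' by (intro Bochner_Integration.integral_cong) (auto simp: indicator_def)
  also have "\<bar>\<dots>\<bar> \<le> (\<integral>v. \<bar>indicator {0..t} v * h' v\<bar> \<partial>lborel)" by (rule integral_abs_bound)
  also have "\<dots> \<le> (\<integral>v. C * indicator {0..t} v \<partial>lborel)"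
  proof (rule integral_mono)
    show "integrable lborel (\<lambda>v. \<bar>indicator {0..t} v * h' v\<bar>)"
      by (intro integrable_abs int_bddS[OF _ _ hm hb]) (use t in auto)
    show "integrable lborel (\<lambda>v. C * indicator {0..t} v)" by (intro integrable_mult_right integrable_real_indicator) (use t in auto)
    show "\<bar>indicator {0..t} v * h' v\<bar> \<le> C * indicator {0..t} v" for v
      using hb[of v] by (auto simp: indicator_def)
  qed
  also have "\<dots> = C * t" using t by simp
  finally show ?thesis .
qed

lemma section_meas:
  fixes Z :: "real \<times> 'a \<Rightarrow> real"
  assumes "Z \<in> borel_measurable (lborel \<Otimes>\<^sub>M F)" "\<omega> \<in> space F"
  shows "(\<lambda>v. Z (v, \<omega>)) \<in> borel_measurable borel"
  using measurable_compose[OF measurable_Pair2'[OF assms(2), of lborel] assms(1)] by simp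

lemma mart_cong:
  assumes "martingale M F X" "\<And>t \<omega>. t \<ge> 0 \<Longrightarrow> \<omega> \<in> space M \<Longrightarrow> X t \<omega> = Y t \<omega>"
    and "\<And>t. space (F t) = space M"
  shows "martingale M F Y"
  unfolding martingale_def
proof (intro conjI allI impI)
  fix t :: real assume t: "t \<ge> 0"
  have "\<forall>t\<ge>0. integrable M (X t) \<and> X t \<in> borel_measurable (F t)" using assms(1) unfolding martingale_def by blast
  then have i: "integrable M (X t)" and m: "X t \<in> borel_measurable (F t)" using t by auto
  have "integrable M (X t) = integrable M (Y t)"
    by (rule Bochner_Integration.integrable_cong) (use assms(2) t in simp_all)
  then show "integrable M (Y t)" using i by simp
  have "X t \<in> borel_measurable (F t) \<longleftrightarrow> Y t \<in> borel_measurable (F t)"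
    by (rule measurable_cong) (use assms(2,3) t in simp)
  then show "Y t \<in> borel_measurable (F t)" using m by simp
next
  fix s t :: real and A assume st: "0 \<le> s" "s \<le> t" "A \<in> sets (F s)"
  have "\<forall>s t A. 0 \<le> s \<longrightarrow> s \<le> t \<longrightarrow> A \<in> sets (F s) \<longrightarrow>
        (LINT \<omega>:A|M. X t \<omega>) = (LINT \<omega>:A|M. X s \<omega>)"
    using assms(1) unfolding martingale_def by blast
  then have "(LINT \<omega>:A|M. X t \<omega>) = (LINT \<omega>:A|M. X s \<omega>)" using st by blast
  moreover have "(LINT \<omega>:A|M. X u \<omega>) = (LINT \<omega>:A|M. Y u \<omega>)" if "u \<ge> 0" for u
    unfolding set_lebesgue_integral_def using assms(2) that by (intro Bochner_Integration.integral_cong) simp_all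
  ultimately show "(LINT \<omega>:A|M. Y t \<omega>) = (LINT \<omega>:A|M. Y s \<omega>)" using st by simp
qed

lemma bound_cl:
  fixes q :: "real \<Rightarrow> real"
  assumes "continuous_on {0..1} q" obtains B where "\<And>x. \<bar>q (cl x)\<bar> \<le> B"
  using cont_bounded01[OF assms] cl_in by metis

lemma main_core:
  fixes c :: real and \<nu> :: "real measure"
    and M :: "'a measure" and R :: "real \<Rightarrow> 'a \<Rightarrow> real"
    and N :: "'b measure" and Rh :: "real \<Rightarrow> 'b \<Rightarrow> real"
    and f f1 f2 psi :: "real \<Rightarrow> real"
  assumes nu_sets: "sets \<nu> = sets borel"
    and nu_fin: "(\<integral>\<^sup>+ x. ennreal (x^2) \<partial>\<nu>) < \<infinity>"
    and M: "prob_space M"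
    and R_meas: "\<And>t. R t \<in> borel_measurable M"
    and R_range: "\<And>t \<omega>. \<omega> \<in> space M \<Longrightarrow> R t \<omega> \<in> {0..1}"
    and R_cadlag: "\<And>\<omega>. \<omega> \<in> space M \<Longrightarrow> cadlag (\<lambda>t. R t \<omega>)"
    and R_gen: "\<And>g g1 g2. C2_01 g g1 g2 \<Longrightarrow>
        martingale M (natfilt M R)
          (\<lambda>t \<omega>. g (R t \<omega>) - g (R 0 \<omega>) - (LINT s:{0..t}|lborel. genG c \<nu> g g2 (R s \<omega>)))"
    and R0: "(\<integral>\<omega>. R 0 \<omega> * (1 - R 0 \<omega>) \<partial>M) > 0"
    and N: "prob_space N"
    and Rh_meas: "\<And>t. Rh t \<in> borel_measurable N"
    and Rh_range: "\<And>t \<omega>. \<omega> \<in> space N \<Longrightarrow> Rh t \<omega> \<in> {0..1}"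
    and Rh_cadlag: "\<And>\<omega>. \<omega> \<in> space N \<Longrightarrow> cadlag (\<lambda>t. Rh t \<omega>)"
    and Rh_law: "\<And>t A. t \<ge> 0 \<Longrightarrow> A \<in> sets (\<Pi>\<^sub>M s\<in>{0..t}. borel) \<Longrightarrow>
        measure N {\<omega> \<in> space N. restrict (\<lambda>s. Rh s \<omega>) {0..t} \<in> A}
        = (\<integral>\<omega>. indicator A (restrict (\<lambda>s. R s \<omega>) {0..t}) * Hfun c \<nu> t (R t \<omega>) \<partial>M)
          / (\<integral>\<omega>. Hfun c \<nu> 0 (R 0 \<omega>) \<partial>M)"
    and C: "C2c f f1 f2"
    and psi_def: "\<And>x. psi x = genG0 c \<nu> f f1 (cl x) + genG1 c \<nu> f f2 (cl x)"
  shows "martingale N (natfilt N Rh)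
          (\<lambda>t \<omega>. f (Rh t \<omega>) - f (Rh 0 \<omega>) - (\<integral>v. indicator {0..t} v * psi (Rh v \<omega>) \<partial>lborel))"
proof -
  interpret M: prob_space M by (rule M)
  interpret N: prob_space N by (rule N)
  define r where "r = r2 c \<nu>"
  define phi where "phi = (\<lambda>x. hh x * f x)"
  define phi1 where "phi1 = (\<lambda>x. (1 - 2 * x) * f x + hh x * f1 x)"
  define phi2 where "phi2 = (\<lambda>x. - 2 * f x + 2 * (1 - 2 * x) * f1 x + hh x * f2 x)"
  have Cp: "C2c phi phi1 phi2" unfolding phi_def phi1_def phi2_def by (rule C2c_prod[OF C])
  then have Cp01: "C2_01 phi phi1 phi2" by (simp add: C2c_def)
  define G where "G x = genG c \<nu> phi phi2 (cl x)" for x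
  define fq where "fq x = f (cl x)" for x
  define phiq where "phiq x = phi (cl x)" for x
  have fc: "continuous_on UNIV f" using C by (simp add: C2c_def)
  have fc01: "continuous_on {0..1} f" using fc by (rule continuous_on_subset) auto
  have phic01: "continuous_on {0..1} phi" using Cp unfolding C2c_def by (auto intro: continuous_on_subset)
  have psi_eq: "psi = (\<lambda>x. (\<lambda>x. genG0 c \<nu> f f1 x + genG1 c \<nu> f f2 x) (cl x))" using psi_def by auto
  have psi01: "continuous_on {0..1} (\<lambda>x. genG0 c \<nu> f f1 x + genG1 c \<nu> f f2 x)"
    by (intro continuous_on_add cont_genG0[OF nu_sets nu_fin C] cont_genG1[OF nu_sets nu_fin C])
  have psic: "continuous_on UNIV psi" unfolding psi_eq by (rule cont_comp_cl[OF psi01])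
  have G01: "continuous_on {0..1} (genG c \<nu> phi phi2)" by (rule cont_genG[OF nu_sets nu_fin Cp])
  have Gc: "continuous_on UNIV G" unfolding G_def by (rule cont_comp_cl[OF G01])
  have fqc: "continuous_on UNIV fq" unfolding fq_def by (rule cont_comp_cl[OF fc01])
  have phiqc: "continuous_on UNIV phiq" unfolding phiq_def by (rule cont_comp_cl[OF phic01])
  obtain Bpsi where Bpsi: "\<And>x. \<bar>psi x\<bar> \<le> Bpsi" using bound_cl[OF psi01] psi_eq by metis
  obtain BG where BG: "\<And>x. \<bar>G x\<bar> \<le> BG" using bound_cl[OF G01] unfolding G_def by metis
  obtain Bf where Bf: "\<And>x. \<bar>fq x\<bar> \<le> Bf" using bound_cl[OF fc01] unfolding fq_def by metis
  obtain Bphi where Bphi: "\<And>x. \<bar>phiq x\<bar> \<le> Bphi" using bound_cl[OF phic01] unfolding phiq_def by metis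
  have Rhc: "\<And>\<omega> u. \<omega> \<in> space N \<Longrightarrow> 0 \<le> u \<Longrightarrow> continuous (at_right u) (\<lambda>v. Rh v \<omega>)"
    using Rh_cadlag unfolding cadlag_def by blast
  have Rc: "\<And>\<omega> u. \<omega> \<in> space M \<Longrightarrow> 0 \<le> u \<Longrightarrow> continuous (at_right u) (\<lambda>v. R v \<omega>)"
    using R_cadlag unfolding cadlag_def by blast
  have Hfun_eq: "Hfun c \<nu> u x = hh x * exp (r * u)" for u x unfolding Hfun_def hh_def r_def by simp
  define c0 where "c0 = (\<integral>\<omega>. Hfun c \<nu> 0 (R 0 \<omega>) \<partial>M)"
  have c0pos: "c0 > 0" using R0 unfolding c0_def Hfun_eq hh_def by simp
  have Hc: "\<And>u. continuous_on {0..1} (Hfun c \<nu> u)" unfolding Hfun_eq[abs_def] hh_def by (intro continuous_intros)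
  have Hp: "\<And>u x. x \<in> {0..1} \<Longrightarrow> Hfun c \<nu> u x \<ge> 0" unfolding Hfun_eq hh_def by auto
  have law: "\<And>u A. u \<ge> 0 \<Longrightarrow> A \<in> sets (PS u) \<Longrightarrow>
        measure N {\<omega> \<in> space N. restrict (\<lambda>s. Rh s \<omega>) {0..u} \<in> A}
        = (\<integral>\<omega>. indicator A (restrict (\<lambda>s. R s \<omega>) {0..u}) * Hfun c \<nu> u (R u \<omega>) \<partial>M) / c0"
    unfolding c0_def by (rule Rh_law)
  have K1: "fq x * Hfun c \<nu> u x = exp (r * u) * phiq x" if "x \<in> {0..1}" for x u
    using that unfolding fq_def phiq_def phi_def Hfun_eq by (simp add: cl_id)
  have K2: "psi x * Hfun c \<nu> u x = exp (r * u) * (G x + r * phiq x)" if "x \<in> {0..1}" for x u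
  proof -
    have "hh x * (genG0 c \<nu> f f1 x + genG1 c \<nu> f f2 x) = genG c \<nu> phi phi2 x + r * (hh x * f x)"
      unfolding phi_def phi2_def r_def by (rule gen_identity[OF nu_sets nu_fin C that])
    then have e1: "exp (r * u) * (hh x * (genG0 c \<nu> f f1 x + genG1 c \<nu> f f2 x))
        = exp (r * u) * (genG c \<nu> phi phi2 x + r * (hh x * f x))" by simp
    have px: "phi x = hh x * f x" by (simp add: phi_def)
    have e2: "psi x * Hfun c \<nu> u x = exp (r * u) * (hh x * (genG0 c \<nu> f f1 x + genG1 c \<nu> f f2 x))"
      using that by (simp add: psi_def Hfun_eq cl_id)
    have e3: "exp (r * u) * (G x + r * phiq x) = exp (r * u) * (genG c \<nu> phi phi2 x + r * (hh x * f x))"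
      using that by (simp add: G_def phiq_def cl_id px)
    show ?thesis using e1 e2 e3 by simp
  qed
  define Y where "Y t \<omega> = f (Rh t \<omega>) - f (Rh 0 \<omega>) - (\<integral>v. indicator {0..t} v * psi (Rh v \<omega>) \<partial>lborel)" for t \<omega>
  have fRh: "f (Rh u \<omega>) = fq (Rh u \<omega>)" if "\<omega> \<in> space N" for u \<omega>
    using Rh_range[OF that] unfolding fq_def by (simp add: cl_id)
  have Ymeas: "Y t \<in> borel_measurable F" if t: "t \<ge> 0"
    and Fm: "\<And>u. u \<in> {0..t} \<Longrightarrow> Rh u \<in> borel_measurable F" and Fs: "space F = space N" for t F
  proof -
    have fm: "f \<in> borel_measurable borel" by (rule borel_measurable_continuous_onI[OF fc])
    have 1: "(\<lambda>\<omega>. f (Rh t \<omega>)) \<in> borel_measurable F" using t by (intro measurable_compose[OF Fm fm]) auto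
    have 2: "(\<lambda>\<omega>. f (Rh 0 \<omega>)) \<in> borel_measurable F" using t by (intro measurable_compose[OF Fm fm]) auto
    have 3: "(\<lambda>\<omega>. \<integral>v. indicator {0..t} v * psi (Rh v \<omega>) \<partial>lborel) \<in> borel_measurable F"
      by (rule integ_meas[OF t Fm _ psic]) (use Rhc Fs in auto)
    show ?thesis unfolding Y_def[abs_def] using 1 2 3 by (intro borel_measurable_diff) auto
  qed
  have Ybound: "\<bar>Y t \<omega>\<bar> \<le> 2 * Bf + Bpsi * t" if t: "t \<ge> 0" and \<omega>: "\<omega> \<in> space N" for t \<omega>
  proof -
    have J: "(\<lambda>p. psi (Rh (ct t (fst p)) (snd p))) \<in> borel_measurable (lborel \<Otimes>\<^sub>M N)"
      by (rule joint_q[OF t Rh_meas Rhc psic]) auto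
    have "\<bar>\<integral>v. indicator {0..t} v * psi (Rh v \<omega>) \<partial>lborel\<bar> \<le> Bpsi * t"
    proof (rule ind_bound[OF t section_meas[OF J \<omega>]])
      show "\<bar>psi (Rh (ct t (fst (v, \<omega>))) (snd (v, \<omega>)))\<bar> \<le> Bpsi" for v using Bpsi by simp
      show "psi (Rh v \<omega>) = psi (Rh (ct t (fst (v, \<omega>))) (snd (v, \<omega>)))" if "v \<in> {0..t}" for v
        using that by (simp add: ct_id)
    qed
    moreover have "\<bar>f (Rh t \<omega>)\<bar> \<le> Bf" "\<bar>f (Rh 0 \<omega>)\<bar> \<le> Bf" using Bf fRh[OF \<omega>] by auto
    ultimately show ?thesis unfolding Y_def by linarith
  qed
  have Yint: "integrable N (Y t)" if t: "t \<ge> 0" for t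
  proof (rule N.integrable_const_bound[where B="2 * Bf + Bpsi * t"])
    show "AE \<omega> in N. norm (Y t \<omega>) \<le> 2 * Bf + Bpsi * t" using Ybound[OF t] by (intro AE_I2) auto
    show "Y t \<in> borel_measurable N" by (rule Ymeas[OF t Rh_meas]) auto
  qed
  have part1: "\<forall>t\<ge>0. integrable N (Y t) \<and> Y t \<in> borel_measurable (natfilt N Rh t)"
  proof (intro allI impI conjI)
    fix t :: real assume t: "t \<ge> 0"
    show "integrable N (Y t)" by (rule Yint[OF t])
    show "Y t \<in> borel_measurable (natfilt N Rh t)"
      by (rule Ymeas[OF t natfilt_meas natfilt_space])
  qed
  have part2: "\<forall>s t A. 0 \<le> s \<longrightarrow> s \<le> t \<longrightarrow> A \<in> sets (natfilt N Rh s) \<longrightarrow>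
        (LINT \<omega>:A|N. Y t \<omega>) = (LINT \<omega>:A|N. Y s \<omega>)"
  proof (intro allI impI)
    fix s t :: real and A assume s0: "0 \<le> s" and st: "s \<le> t" and A: "A \<in> sets (natfilt N Rh s)"
    have t0: "0 \<le> t" using s0 st by linarith
    obtain B where B: "B \<in> sets (PS s)" and AB: "A = (\<lambda>\<omega>. restrict (\<lambda>u. Rh u \<omega>) {0..s}) -` B \<inter> space N"
      using natfilt_sets[OF A] by blast
    define A' where "A' = (\<lambda>\<omega>. restrict (\<lambda>u. R u \<omega>) {0..s}) -` B \<inter> space M"
    have A'F: "A' \<in> sets (natfilt M R s)"
      unfolding natfilt_def sets_vimage_algebra2[OF path_space] A'_def using B by blast
    have AN: "A \<in> sets N" by (rule natfilt_sub[OF Rh_meas A])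
    have A'M: "A' \<in> sets M" by (rule natfilt_sub[OF R_meas A'F])
    have TR: "(\<integral>\<omega>. indicator A \<omega> * q (Rh u \<omega>) \<partial>N)
        = (\<integral>\<omega>. indicator A' \<omega> * q (R u \<omega>) * Hfun c \<nu> u (R u \<omega>) \<partial>M) / c0"
      if "s \<le> u" "continuous_on UNIV q" for u and q :: "real \<Rightarrow> real"
      unfolding AB A'_def
      by (rule transferA[OF M N R_meas Rh_meas R_range c0pos Hc Hp law s0 that(1) B that(2)])
    define mm where "mm u = (\<integral>\<omega>. indicator A' \<omega> * phiq (R u \<omega>) \<partial>M)" for u
    define gt where "gt v = (\<integral>\<omega>. indicator A' \<omega> * G (R (ct t v) \<omega>) \<partial>M)" for v
    have intM: "integrable M (\<lambda>\<omega>. indicator A' \<omega> * q (R u \<omega>))" if "continuous_on UNIV q" "\<And>x. \<bar>q x\<bar> \<le> Cq"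
      for q :: "real \<Rightarrow> real" and u Cq
    proof (rule M.integrable_const_bound[where B="\<bar>Cq\<bar>"])
      show "AE \<omega> in M. norm (indicator A' \<omega> * q (R u \<omega>)) \<le> \<bar>Cq\<bar>"
        using that(2) by (intro AE_I2) (auto simp: indicator_def intro: order_trans[OF _ abs_ge_self])
      show "(\<lambda>\<omega>. indicator A' \<omega> * q (R u \<omega>)) \<in> borel_measurable M"
        using A'M by (intro borel_measurable_times borel_measurable_indicator measurable_compose[OF R_meas borel_measurable_continuous_onI[OF that(1)]])
    qed
    have fTR: "(\<integral>\<omega>. indicator A \<omega> * fq (Rh u \<omega>) \<partial>N) = exp (r * u) * mm u / c0" if "s \<le> u" for u
    proof -
      have "(\<integral>\<omega>. indicator A' \<omega> * fq (R u \<omega>) * Hfun c \<nu> u (R u \<omega>) \<partial>M)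
          = (\<integral>\<omega>. exp (r * u) * (indicator A' \<omega> * phiq (R u \<omega>)) \<partial>M)"
        by (rule Bochner_Integration.integral_cong[OF refl]) (use K1 R_range in \<open>auto simp: indicator_def\<close>)
      also have "\<dots> = exp (r * u) * mm u" unfolding mm_def by (rule integral_mult_right_zero)
      finally show ?thesis using TR[OF that fqc] by simp
    qed
    have RmT: "\<And>u. u \<in> {0..t} \<Longrightarrow> R u \<in> borel_measurable M" by (rule R_meas)
    have RcT: "\<And>\<omega> u. \<omega> \<in> space M \<Longrightarrow> 0 \<le> u \<Longrightarrow> u < t \<Longrightarrow> continuous (at_right u) (\<lambda>v. R v \<omega>)"
      using Rc by blast
    have RhmT: "\<And>u. u \<in> {0..t} \<Longrightarrow> Rh u \<in> borel_measurable N" by (rule Rh_meas)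
    have RhcT: "\<And>\<omega> u. \<omega> \<in> space N \<Longrightarrow> 0 \<le> u \<Longrightarrow> u < t \<Longrightarrow> continuous (at_right u) (\<lambda>v. Rh v \<omega>)"
      using Rhc by blast
    have gtm: "gt \<in> borel_measurable borel"
      unfolding gt_def[abs_def] by (rule fub(2)[OF M t0 RmT RcT Gc BG A'M s0 st order_refl])
    have gtb: "\<bar>gt v\<bar> \<le> BG" for v
    proof -
      have "\<bar>gt v\<bar> \<le> (\<integral>\<omega>. \<bar>indicator A' \<omega> * G (R (ct t v) \<omega>)\<bar> \<partial>M)"
        unfolding gt_def by (rule integral_abs_bound)
      also have "\<dots> \<le> (\<integral>\<omega>. BG \<partial>M)"
      proof (rule integral_mono)
        show "integrable M (\<lambda>\<omega>. \<bar>indicator A' \<omega> * G (R (ct t v) \<omega>)\<bar>)"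
          by (intro integrable_abs intM[OF Gc BG])
        show "integrable M (\<lambda>\<omega>. BG)" by simp
        show "\<bar>indicator A' \<omega> * G (R (ct t v) \<omega>)\<bar> \<le> BG" for \<omega>
          using BG[of "R (ct t v) \<omega>"] BG[of 0] by (auto simp: indicator_def)
      qed
      also have "\<dots> = BG" by (simp add: M.emeasure_space_1 M.prob_space)
      finally show ?thesis .
    qed
    have psiTR: "(\<integral>\<omega>. indicator A \<omega> * psi (Rh (ct t v) \<omega>) \<partial>N) = exp (r * v) * (gt v + r * mm v) / c0"
      if v: "v \<in> {s<..t}" for v
    proof -
      have ctv: "ct t v = v" using v s0 by (simp add: ct_id)
      have "(\<integral>\<omega>. indicator A' \<omega> * psi (R v \<omega>) * Hfun c \<nu> v (R v \<omega>) \<partial>M)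
          = (\<integral>\<omega>. exp (r * v) * (indicator A' \<omega> * G (R v \<omega>) + r * (indicator A' \<omega> * phiq (R v \<omega>))) \<partial>M)"
      proof (rule Bochner_Integration.integral_cong[OF refl])
        fix \<omega> assume "\<omega> \<in> space M"
        then show "indicator A' \<omega> * psi (R v \<omega>) * Hfun c \<nu> v (R v \<omega>)
          = exp (r * v) * (indicator A' \<omega> * G (R v \<omega>) + r * (indicator A' \<omega> * phiq (R v \<omega>)))"
          using K2[OF R_range, of \<omega> v v] by (auto simp: indicator_def algebra_simps)
      qed
      also have "\<dots> = exp (r * v) * ((\<integral>\<omega>. indicator A' \<omega> * G (R v \<omega>) \<partial>M) + r * mm v)"
        unfolding mm_def using intM[OF Gc BG, of v] intM[OF phiqc Bphi, of v] by simp
      also have "(\<integral>\<omega>. indicator A' \<omega> * G (R v \<omega>) \<partial>M) = gt v" unfolding gt_def ctv ..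
      finally show ?thesis unfolding ctv using TR[OF _ psic, of v] v by simp
    qed
    \<comment> \<open>representation of mm via the martingale property of R\<close>
    have mrep: "mm u = mm s + (\<integral>v. indicator {s<..u} v * gt v \<partial>lborel)" if u: "u \<in> {s..t}" for u
    proof -
      define X where "X u \<omega> = phi (R u \<omega>) - phi (R 0 \<omega>) - (LINT v:{0..u}|lborel. genG c \<nu> phi phi2 (R v \<omega>))" for u \<omega>
      have mart: "martingale M (natfilt M R) X" unfolding X_def[abs_def] by (rule R_gen[OF Cp01])
      have su: "0 \<le> s" "s \<le> u" "u \<le> t" using u s0 by auto
      have eqA: "(LINT \<omega>:A'|M. X u \<omega>) = (LINT \<omega>:A'|M. X s \<omega>)"
        using mart su A'F unfolding martingale_def by blast
      have iX: "integrable M (X w)" if "w \<ge> 0" for w using mart that unfolding martingale_def by blast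
      have J: "(\<lambda>p. G (R (ct t (fst p)) (snd p))) \<in> borel_measurable (lborel \<Otimes>\<^sub>M M)"
        by (rule joint_q[OF t0 RmT RcT Gc])
      define I where "I \<omega> = (\<integral>v. indicator {s<..u} v * G (R v \<omega>) \<partial>lborel)" for \<omega>
      have Xdiff: "X u \<omega> - X s \<omega> = phiq (R u \<omega>) - phiq (R s \<omega>) - I \<omega>" if \<omega>: "\<omega> \<in> space M" for \<omega>
      proof -
        have gi: "(LINT v:{0..w}|lborel. genG c \<nu> phi phi2 (R v \<omega>)) = (\<integral>v. indicator {0..w} v * G (R v \<omega>) \<partial>lborel)" for w
          unfolding set_lebesgue_integral_def G_def using R_range[OF \<omega>] by (simp add: cl_id)
        have ph: "phi (R w \<omega>) = phiq (R w \<omega>)" for w using R_range[OF \<omega>] by (simp add: phiq_def cl_id)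
        have "(\<integral>v. indicator {0..u} v * G (R v \<omega>) \<partial>lborel) - (\<integral>v. indicator {0..s} v * G (R v \<omega>) \<partial>lborel) = I \<omega>"
          unfolding I_def
        proof (rule ind_split[OF su(1,2) section_meas[OF J \<omega>]])
          show "\<bar>G (R (ct t (fst (v, \<omega>))) (snd (v, \<omega>)))\<bar> \<le> BG" for v using BG by simp
          show "G (R v \<omega>) = G (R (ct t (fst (v, \<omega>))) (snd (v, \<omega>)))" if "v \<in> {0..u}" for v
            using that su by (simp add: ct_id)
        qed
        then show ?thesis unfolding X_def gi ph by simp
      qed
      define D where "D \<omega> = indicator A' \<omega> * (X u \<omega> - X s \<omega>)" for \<omega>
      have Dint: "integrable M D"
      proof -
        have "integrable M (\<lambda>\<omega>. (X u \<omega> - X s \<omega>) * indicator A' \<omega>)" using iX[of u] iX[of s] su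
          by (intro integrable_real_mult_indicator A'M integrable_diff) auto
        then show ?thesis unfolding D_def by (simp add: mult.commute)
      qed
      have D0: "integral\<^sup>L M D = 0"
      proof -
        have ia: "integrable M (\<lambda>\<omega>. indicator A' \<omega> * X w \<omega>)" if "w \<ge> 0" for w
          using integrable_real_mult_indicator[OF A'M iX[OF that]] by (simp add: mult.commute)
        have "integral\<^sup>L M D = (\<integral>\<omega>. indicator A' \<omega> * X u \<omega> - indicator A' \<omega> * X s \<omega> \<partial>M)"
          unfolding D_def by (simp add: right_diff_distrib)
        also have "\<dots> = (LINT \<omega>:A'|M. X u \<omega>) - (LINT \<omega>:A'|M. X s \<omega>)"
          unfolding set_lebesgue_integral_def using ia[of u] ia[of s] su by simp
        finally show ?thesis using eqA by simp
      qed
      have IA: "indicator A' \<omega> * I \<omega> = (indicator A' \<omega> * phiq (R u \<omega>) - indicator A' \<omega> * phiq (R s \<omega>)) - D \<omega>"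
        if "\<omega> \<in> space M" for \<omega>
      proof -
        have e: "I \<omega> = phiq (R u \<omega>) - phiq (R s \<omega>) - (X u \<omega> - X s \<omega>)" using Xdiff[OF that] by linarith
        show ?thesis unfolding D_def e by (simp add: algebra_simps)
      qed
      have "(\<integral>\<omega>. indicator A' \<omega> * I \<omega> \<partial>M) = (\<integral>\<omega>. (indicator A' \<omega> * phiq (R u \<omega>) - indicator A' \<omega> * phiq (R s \<omega>)) - D \<omega> \<partial>M)"
        by (rule Bochner_Integration.integral_cong[OF refl]) (use IA in auto)
      also have "\<dots> = mm u - mm s"
        unfolding mm_def using intM[OF phiqc Bphi, of u] intM[OF phiqc Bphi, of s] Dint D0 by simp
      finally have "(\<integral>\<omega>. indicator A' \<omega> * I \<omega> \<partial>M) = mm u - mm s" .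
      moreover have "(\<integral>\<omega>. indicator A' \<omega> * I \<omega> \<partial>M) = (\<integral>v. indicator {s<..u} v * gt v \<partial>lborel)"
        unfolding I_def gt_def by (rule fub(1)[OF M t0 RmT RcT Gc BG A'M su])
      ultimately show ?thesis by simp
    qed

    have intN: "integrable N (\<lambda>\<omega>. indicator A \<omega> * q (Rh u \<omega>))" if "continuous_on UNIV q" "\<And>x. \<bar>q x\<bar> \<le> Cq"
      for q :: "real \<Rightarrow> real" and u Cq
    proof (rule N.integrable_const_bound[where B="\<bar>Cq\<bar>"])
      show "AE \<omega> in N. norm (indicator A \<omega> * q (Rh u \<omega>)) \<le> \<bar>Cq\<bar>"
        using that(2) by (intro AE_I2) (auto simp: indicator_def intro: order_trans[OF _ abs_ge_self])
      show "(\<lambda>\<omega>. indicator A \<omega> * q (Rh u \<omega>)) \<in> borel_measurable N"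
        using AN by (intro borel_measurable_times borel_measurable_indicator measurable_compose[OF Rh_meas borel_measurable_continuous_onI[OF that(1)]])
    qed
    have JN: "(\<lambda>p. psi (Rh (ct t (fst p)) (snd p))) \<in> borel_measurable (lborel \<Otimes>\<^sub>M N)"
      by (rule joint_q[OF t0 RhmT RhcT psic])
    define IN where "IN \<omega> = (\<integral>v. indicator {s<..t} v * psi (Rh v \<omega>) \<partial>lborel)" for \<omega>
    have Ydiff: "Y t \<omega> - Y s \<omega> = fq (Rh t \<omega>) - fq (Rh s \<omega>) - IN \<omega>" if \<omega>: "\<omega> \<in> space N" for \<omega>
    proof -
      have "(\<integral>v. indicator {0..t} v * psi (Rh v \<omega>) \<partial>lborel) - (\<integral>v. indicator {0..s} v * psi (Rh v \<omega>) \<partial>lborel) = IN \<omega>"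
        unfolding IN_def
      proof (rule ind_split[OF s0 st section_meas[OF JN \<omega>]])
        show "\<bar>psi (Rh (ct t (fst (v, \<omega>))) (snd (v, \<omega>)))\<bar> \<le> Bpsi" for v using Bpsi by simp
        show "psi (Rh v \<omega>) = psi (Rh (ct t (fst (v, \<omega>))) (snd (v, \<omega>)))" if "v \<in> {0..t}" for v
          using that by (simp add: ct_id)
      qed
      then show ?thesis unfolding Y_def fRh[OF \<omega>] by simp
    qed
    define DN where "DN \<omega> = indicator A \<omega> * (Y t \<omega> - Y s \<omega>)" for \<omega>
    have iaN: "integrable N (\<lambda>\<omega>. indicator A \<omega> * Y w \<omega>)" if "w \<ge> 0" for w
      using integrable_real_mult_indicator[OF AN Yint[OF that]] by (simp add: mult.commute)
    have DNint: "integrable N DN" unfolding DN_def right_diff_distrib using iaN[OF t0] iaN[OF s0] by simp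
    have DN0: "integral\<^sup>L N DN = (LINT \<omega>:A|N. Y t \<omega>) - (LINT \<omega>:A|N. Y s \<omega>)"
      unfolding DN_def right_diff_distrib set_lebesgue_integral_def using iaN[OF t0] iaN[OF s0] by simp
    have INA: "indicator A \<omega> * IN \<omega> = (indicator A \<omega> * fq (Rh t \<omega>) - indicator A \<omega> * fq (Rh s \<omega>)) - DN \<omega>"
      if "\<omega> \<in> space N" for \<omega>
    proof -
      have e: "IN \<omega> = fq (Rh t \<omega>) - fq (Rh s \<omega>) - (Y t \<omega> - Y s \<omega>)" using Ydiff[OF that] by linarith
      show ?thesis unfolding DN_def e by (simp add: algebra_simps)
    qed
    have "(\<integral>\<omega>. indicator A \<omega> * IN \<omega> \<partial>N) = (\<integral>\<omega>. (indicator A \<omega> * fq (Rh t \<omega>) - indicator A \<omega> * fq (Rh s \<omega>)) - DN \<omega> \<partial>N)"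
      by (rule Bochner_Integration.integral_cong[OF refl]) (use INA in auto)
    also have "\<dots> = (\<integral>\<omega>. indicator A \<omega> * fq (Rh t \<omega>) \<partial>N) - (\<integral>\<omega>. indicator A \<omega> * fq (Rh s \<omega>) \<partial>N) - integral\<^sup>L N DN"
      using intN[OF fqc Bf, of t] intN[OF fqc Bf, of s] DNint by simp
    finally have E1: "(LINT \<omega>:A|N. Y t \<omega>) - (LINT \<omega>:A|N. Y s \<omega>)
        = (\<integral>\<omega>. indicator A \<omega> * fq (Rh t \<omega>) \<partial>N) - (\<integral>\<omega>. indicator A \<omega> * fq (Rh s \<omega>) \<partial>N) - (\<integral>\<omega>. indicator A \<omega> * IN \<omega> \<partial>N)"
      unfolding DN0 by simp
    have E2: "(\<integral>\<omega>. indicator A \<omega> * IN \<omega> \<partial>N) = (\<integral>v. indicator {s<..t} v * (exp (r * v) * (gt v + r * mm v)) \<partial>lborel) / c0"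
    proof -
      have "(\<integral>\<omega>. indicator A \<omega> * IN \<omega> \<partial>N) = (\<integral>v. indicator {s<..t} v * (\<integral>\<omega>. indicator A \<omega> * psi (Rh (ct t v) \<omega>) \<partial>N) \<partial>lborel)"
        unfolding IN_def by (rule fub(1)[OF N t0 RhmT RhcT psic Bpsi AN s0 st order_refl])
      also have "\<dots> = (\<integral>v. indicator {s<..t} v * (exp (r * v) * (gt v + r * mm v)) / c0 \<partial>lborel)"
      proof (rule Bochner_Integration.integral_cong[OF refl])
        fix v show "indicator {s<..t} v * (\<integral>\<omega>. indicator A \<omega> * psi (Rh (ct t v) \<omega>) \<partial>N)
            = indicator {s<..t} v * (exp (r * v) * (gt v + r * mm v)) / c0"
          by (cases "v \<in> {s<..t}") (simp_all add: psiTR)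
      qed
      also have "\<dots> = (\<integral>v. indicator {s<..t} v * (exp (r * v) * (gt v + r * mm v)) \<partial>lborel) / c0"
        by (rule integral_divide_zero)
      finally show ?thesis .
    qed
    have E3: "exp (r * t) * mm t - exp (r * s) * mm s = (\<integral>v. indicator {s<..t} v * (exp (r * v) * (gt v + r * mm v)) \<partial>lborel)"
      by (rule TRI[OF st gtm gtb mrep])
    have "(LINT \<omega>:A|N. Y t \<omega>) - (LINT \<omega>:A|N. Y s \<omega>) = (exp (r * t) * mm t - exp (r * s) * mm s) / c0 - (exp (r * t) * mm t - exp (r * s) * mm s) / c0"
      unfolding E1 E2 fTR[OF st] fTR[OF order_refl] E3[symmetric] by (simp add: diff_divide_distrib)
    then show "(LINT \<omega>:A|N. Y t \<omega>) = (LINT \<omega>:A|N. Y s \<omega>)" by simp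
  qed
  show ?thesis using part1 part2 unfolding martingale_def Y_def[abs_def] by blast
qed

theorem proposition2p7:
  fixes c :: real and \<nu> :: "real measure"
    and M :: "'a measure" and R :: "real \<Rightarrow> 'a \<Rightarrow> real"
    and N :: "'b measure" and Rh :: "real \<Rightarrow> 'b \<Rightarrow> real"
    and f f1 f2 :: "real \<Rightarrow> real"
  assumes c: "c \<ge> 0"
    and nu_sets: "sets \<nu> = sets borel"
    and nu_supp: "emeasure \<nu> (UNIV - {0<..1}) = 0"
    and nu_fin: "(\<integral>\<^sup>+ x. ennreal (x^2) \<partial>\<nu>) < \<infinity>"
    \<comment> \<open>R: the generalized Fleming--Viot process with generator G, on the probability space M\<close>
    and M: "prob_space M"
    and R_meas: "\<And>t. R t \<in> borel_measurable M"
    and R_range: "\<And>t \<omega>. \<omega> \<in> space M \<Longrightarrow> R t \<omega> \<in> {0..1}"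
    and R_cadlag: "\<And>\<omega>. \<omega> \<in> space M \<Longrightarrow> cadlag (\<lambda>t. R t \<omega>)"
    and R_gen: "\<And>g g1 g2. C2_01 g g1 g2 \<Longrightarrow>
        martingale M (natfilt M R)
          (\<lambda>t \<omega>. g (R t \<omega>) - g (R 0 \<omega>) - (LINT s:{0..t}|lborel. genG c \<nu> g g2 (R s \<omega>)))"
    and R0: "(\<integral>\<omega>. R 0 \<omega> * (1 - R 0 \<omega>) \<partial>M) > 0"
    \<comment> \<open>Rh: the Doob h-transform of R by H, on the probability space N\<close>
    and N: "prob_space N"
    and Rh_meas: "\<And>t. Rh t \<in> borel_measurable N"
    and Rh_range: "\<And>t \<omega>. \<omega> \<in> space N \<Longrightarrow> Rh t \<omega> \<in> {0..1}"
    and Rh_cadlag: "\<And>\<omega>. \<omega> \<in> space N \<Longrightarrow> cadlag (\<lambda>t. Rh t \<omega>)"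
    and Rh_law: "\<And>t A. t \<ge> 0 \<Longrightarrow> A \<in> sets (\<Pi>\<^sub>M s\<in>{0..t}. borel) \<Longrightarrow>
        measure N {\<omega> \<in> space N. restrict (\<lambda>s. Rh s \<omega>) {0..t} \<in> A}
        = (\<integral>\<omega>. indicator A (restrict (\<lambda>s. R s \<omega>) {0..t}) * Hfun c \<nu> t (R t \<omega>) \<partial>M)
          / (\<integral>\<omega>. Hfun c \<nu> 0 (R 0 \<omega>) \<partial>M)"
    and f: "C2_01 f f1 f2"
  shows "martingale N (natfilt N Rh)
          (\<lambda>t \<omega>. f (Rh t \<omega>) - f (Rh 0 \<omega>)
             - (LINT s:{0..t}|lborel. genG0 c \<nu> f f1 (Rh s \<omega>) + genG1 c \<nu> f f2 (Rh s \<omega>)))"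
proof -
  define fc where "fc x = f (cl x)" for x
  define f1c where "f1c x = f1 (cl x)" for x
  define f2c where "f2c x = f2 (cl x)" for x
  have C: "C2c fc f1c f2c" unfolding fc_def[abs_def] f1c_def[abs_def] f2c_def[abs_def] by (rule C2_clamp[OF f])
  define psi where "psi x = genG0 c \<nu> fc f1c (cl x) + genG1 c \<nu> fc f2c (cl x)" for x
  have S: "{0<..1::real} \<in> sets \<nu>" using nu_sets by simp
  have g0: "genG0 c \<nu> fc f1c x = genG0 c \<nu> f f1 x" if x: "x \<in> {0..1}" for x
  proof -
    have "(LINT y:{0<..1}|\<nu>. y * (1 - y) * ((fc (x * (1 - y) + y) - fc x) + (fc (x * (1 - y)) - fc x)))
        = (LINT y:{0<..1}|\<nu>. y * (1 - y) * ((f (x * (1 - y) + y) - f x) + (f (x * (1 - y)) - f x)))"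
    proof (rule set_lebesgue_integral_cong[OF S], intro allI impI)
      fix y :: real assume "y \<in> {0<..1}"
      then have y: "y \<in> {0..1}" by auto
      show "y * (1 - y) * ((fc (x * (1 - y) + y) - fc x) + (fc (x * (1 - y)) - fc x))
          = y * (1 - y) * ((f (x * (1 - y) + y) - f x) + (f (x * (1 - y)) - f x))"
        unfolding fc_def using args01[OF x y] x by (simp add: cl_id)
    qed
    then show ?thesis unfolding genG0_def f1c_def using x by (simp add: cl_id)
  qed
  have g1: "genG1 c \<nu> fc f2c x = genG1 c \<nu> f f2 x" if x: "x \<in> {0..1}" for x
  proof -
    have "(LINT y:{0<..1}|\<nu>. (1 - y)^2 * (x * (fc (x * (1 - y) + y) - fc x) + (1 - x) * (fc (x * (1 - y)) - fc x)))
        = (LINT y:{0<..1}|\<nu>. (1 - y)^2 * (x * (f (x * (1 - y) + y) - f x) + (1 - x) * (f (x * (1 - y)) - f x)))"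
    proof (rule set_lebesgue_integral_cong[OF S], intro allI impI)
      fix y :: real assume "y \<in> {0<..1}"
      then have y: "y \<in> {0..1}" by auto
      show "(1 - y)^2 * (x * (fc (x * (1 - y) + y) - fc x) + (1 - x) * (fc (x * (1 - y)) - fc x))
          = (1 - y)^2 * (x * (f (x * (1 - y) + y) - f x) + (1 - x) * (f (x * (1 - y)) - f x))"
        unfolding fc_def using args01[OF x y] x by (simp add: cl_id)
    qed
    then show ?thesis unfolding genG1_def f2c_def using x by (simp add: cl_id)
  qed
  have mc: "martingale N (natfilt N Rh)
          (\<lambda>t \<omega>. fc (Rh t \<omega>) - fc (Rh 0 \<omega>) - (\<integral>v. indicator {0..t} v * psi (Rh v \<omega>) \<partial>lborel))"
    by (rule main_core[OF nu_sets nu_fin M R_meas R_range R_cadlag R_gen R0 N Rh_meas Rh_range Rh_cadlag Rh_law C psi_def])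
  show ?thesis
  proof (rule mart_cong[OF mc])
    fix t :: real and \<omega> assume t: "t \<ge> 0" and \<omega>: "\<omega> \<in> space N"
    have r01: "Rh u \<omega> \<in> {0..1}" for u by (rule Rh_range[OF \<omega>])
    have "(\<integral>v. indicator {0..t} v * psi (Rh v \<omega>) \<partial>lborel)
        = (LINT s:{0..t}|lborel. genG0 c \<nu> f f1 (Rh s \<omega>) + genG1 c \<nu> f f2 (Rh s \<omega>))"
      unfolding set_lebesgue_integral_def
    proof (rule Bochner_Integration.integral_cong[OF refl])
      fix v
      have "psi (Rh v \<omega>) = genG0 c \<nu> f f1 (Rh v \<omega>) + genG1 c \<nu> f f2 (Rh v \<omega>)"
        unfolding psi_def cl_id[OF r01] g0[OF r01] g1[OF r01] ..
      then show "indicator {0..t} v * psi (Rh v \<omega>) = indicator {0..t} v *\<^sub>R (genG0 c \<nu> f f1 (Rh v \<omega>) + genG1 c \<nu> f f2 (Rh v \<omega>))"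
        by simp
    qed
    then show "fc (Rh t \<omega>) - fc (Rh 0 \<omega>) - (\<integral>v. indicator {0..t} v * psi (Rh v \<omega>) \<partial>lborel)
        = f (Rh t \<omega>) - f (Rh 0 \<omega>) - (LINT s:{0..t}|lborel. genG0 c \<nu> f f1 (Rh s \<omega>) + genG1 c \<nu> f f2 (Rh s \<omega>))"
      by (simp add: fc_def cl_id[OF r01])
  qed (simp add: natfilt_space)
qed


end
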